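(* Let $a$ be a strongly regular scale factor (extended evenly to negative arguments) such that there is a constant $C>0$ with \[ \left|\frac{\dddot a(t)\,a^2(t)}{\dot a^3(t)}\right|\le C\quad\text{for all } t>0. \] Then for every $\tau>0$ the function $f(\tau,t_0)$ is differentiable with respect to $\tau$, and \[ \frac{\partial f}{\partial\tau}(\tau,t_0)=\begin{cases}I_1(\tau,t_0)+I_2(\tau,t_0) & \text{if } t_0>0,\\ 2\frac{\partial f}{\partial\tau}(\tau,0)-I_1(\tau,-t_0)-I_2(\tau,-t_0) & \text{if } t_0<0,\end{cases} \] where \[ I_1(\tau,t_0)=-\frac{\dot a(\tau)}{a(\tau)}\int_{t_0}^{\tau}\left[3\frac{\ddot a^2(t)a(t)}{\dot a^4(t)}-\frac{\dddot a(t)a(t)}{\dot a^3(t)}\right]\left[\frac{\sqrt{a^2(\tau)-a^2(t_0)}}{\sqrt{a^2(\tau)-a^2(t)}}-1\right]dt, \] \[ I_2(\tau,t_0)=\frac{\dot a(\tau)}{a(\tau)}\int_{t_0}^{\tau}\frac{\ddot a(t)}{\dot a^2(t)}\left[\frac{a^2(\tau)}{\sqrt{a^2(\tau)-a^2(t)}\sqrt{a^2(\tau)-a^2(t_0)}}-1\right]dt, \] and \[ \frac{\partial f}{\partial\tau}(\tau,0)=\frac{\dot a(\tau)}{a(\tau)}\int_0^{\tau}\left[\frac{\ddot a(t)}{\dot a^2(t)}+\frac{\dddot a(t)a(t)}{\dot a^3(t)}-3\frac{\ddot a^2(t)a(t)}{\dot a^4(t)}\right]\left[\frac{a(\tau)}{\sqrt{a^2(\tau)-a^2(t)}}-1\right]dt.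 \]
   Context: A function $a:[0,\infty)\to[0,\infty)$ is a regular scale factor if: (a) $a(0)=0$; (b) $a$ is increasing and continuous on $[0,\infty)$, twice continuously differentiable on $(0,\infty)$, with an inverse function on $[0,\infty)$; (c) $\frac{a(t)\ddot a(t)}{\dot a(t)^2}\le1$ for all $t>0$ (presupposing $\dot a(t)\ne0$). It is strongly regular if also $\frac{a\ddot a}{\dot a^2}\ge-K$ on $(0,\infty)$ for a constant $K\ge1$. Extend $a$ by $a(-t)=a(t)$. For $0\le t_0<\tau$, $f(\tau,t_0)=\int_{t_0}^{\tau}\frac{\ddot a(t)}{\dot a(t)^2}\left(\frac{\sqrt{a^2(\tau)-a^2(t_0)}}{\sqrt{a^2(\tau)-a^2(t)}}-1\right)dt$, and for $-\tau<t_0<0$, $f(\tau,t_0)=2f(\tau,0)-f(\tau,-t_0)$. *)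

theory Defs
  imports "HOL-Analysis.Analysis"
begin

text \<open>Here a1, a2, a3 stand for the first, second and third derivative of the
scale factor a (required to be such on (0,\<infinity>) by the hypotheses of the theorem).\<close>

definition regular_scale_factor ::
  "(real \<Rightarrow> real) \<Rightarrow> (real \<Rightarrow> real) \<Rightarrow> (real \<Rightarrow> real) \<Rightarrow> bool" where
  "regular_scale_factor a a1 a2 \<longleftrightarrow>
     a 0 = 0 \<and>
     strict_mono_on {0..} a \<and> continuous_on {0..} a \<and>
     bij_betw a {0..} {0..} \<and>
     (\<forall>t>0. (a has_real_derivative a1 t) (at t)) \<and>
     (\<forall>t>0. (a1 has_real_derivative a2 t) (at t)) \<and>
     continuous_on {0<..} a2 \<and>
     (\<forall>t>0. a1 t \<noteq> 0) \<and>
     (\<forall>t>0. a t * a2 t / (a1 t)\<^sup>2 \<le> 1)"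

definition strongly_regular_scale_factor ::
  "(real \<Rightarrow> real) \<Rightarrow> (real \<Rightarrow> real) \<Rightarrow> (real \<Rightarrow> real) \<Rightarrow> bool" where
  "strongly_regular_scale_factor a a1 a2 \<longleftrightarrow>
     regular_scale_factor a a1 a2 \<and>
     (\<exists>K\<ge>1. \<forall>t>0. a t * a2 t / (a1 t)\<^sup>2 \<ge> - K)"

definition f_pos :: "(real \<Rightarrow> real) \<Rightarrow> (real \<Rightarrow> real) \<Rightarrow> (real \<Rightarrow> real) \<Rightarrow> real \<Rightarrow> real \<Rightarrow> real" where
  "f_pos a a1 a2 \<tau> t0 = integral {t0..\<tau>}
     (\<lambda>t. a2 t / (a1 t)\<^sup>2 *
        (sqrt ((a \<tau>)\<^sup>2 - (a t0)\<^sup>2) / sqrt ((a \<tau>)\<^sup>2 - (a t)\<^sup>2) - 1))"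

definition f_fun :: "(real \<Rightarrow> real) \<Rightarrow> (real \<Rightarrow> real) \<Rightarrow> (real \<Rightarrow> real) \<Rightarrow> real \<Rightarrow> real \<Rightarrow> real" where
  "f_fun a a1 a2 \<tau> t0 =
     (if 0 \<le> t0 then f_pos a a1 a2 \<tau> t0
      else 2 * f_pos a a1 a2 \<tau> 0 - f_pos a a1 a2 \<tau> (- t0))"

definition I1 :: "(real \<Rightarrow> real) \<Rightarrow> (real \<Rightarrow> real) \<Rightarrow> (real \<Rightarrow> real) \<Rightarrow> (real \<Rightarrow> real) \<Rightarrow> real \<Rightarrow> real \<Rightarrow> real" where
  "I1 a a1 a2 a3 \<tau> t0 = - (a1 \<tau> / a \<tau>) * integral {t0..\<tau>}
     (\<lambda>t. (3 * (a2 t)\<^sup>2 * a t / (a1 t)^4 - a3 t * a t / (a1 t)^3) *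
        (sqrt ((a \<tau>)\<^sup>2 - (a t0)\<^sup>2) / sqrt ((a \<tau>)\<^sup>2 - (a t)\<^sup>2) - 1))"

definition I2 :: "(real \<Rightarrow> real) \<Rightarrow> (real \<Rightarrow> real) \<Rightarrow> (real \<Rightarrow> real) \<Rightarrow> real \<Rightarrow> real \<Rightarrow> real" where
  "I2 a a1 a2 \<tau> t0 = (a1 \<tau> / a \<tau>) * integral {t0..\<tau>}
     (\<lambda>t. a2 t / (a1 t)\<^sup>2 *
        ((a \<tau>)\<^sup>2 / (sqrt ((a \<tau>)\<^sup>2 - (a t)\<^sup>2) * sqrt ((a \<tau>)\<^sup>2 - (a t0)\<^sup>2)) - 1))"

definition df0 :: "(real \<Rightarrow> real) \<Rightarrow> (real \<Rightarrow> real) \<Rightarrow> (real \<Rightarrow> real) \<Rightarrow> (real \<Rightarrow> real) \<Rightarrow> real \<Rightarrow> real" where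
  "df0 a a1 a2 a3 \<tau> = (a1 \<tau> / a \<tau>) * integral {0..\<tau>}
     (\<lambda>t. (a2 t / (a1 t)\<^sup>2 + a3 t * a t / (a1 t)^3 - 3 * (a2 t)\<^sup>2 * a t / (a1 t)^4) *
        (a \<tau> / sqrt ((a \<tau>)\<^sup>2 - (a t)\<^sup>2) - 1))"

end

theory Submission
  imports Defs
begin


locale sf =
  fixes a a1 a2 a3 :: "real \<Rightarrow> real" and K C :: real
  assumes a0: "a 0 = 0" and smono: "strict_mono_on {0..} a"
    and abij: "bij_betw a {0..} {0..}"
    and d1: "\<And>t. t > 0 \<Longrightarrow> (a has_real_derivative a1 t) (at t)"
    and d2: "\<And>t. t > 0 \<Longrightarrow> (a1 has_real_derivative a2 t) (at t)"
    and d3: "\<And>t. t > 0 \<Longrightarrow> (a2 has_real_derivative a3 t) (at t)"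
    and nz: "\<And>t. t > 0 \<Longrightarrow> a1 t \<noteq> 0"
    and up: "\<And>t. t > 0 \<Longrightarrow> a t * a2 t / (a1 t)^2 \<le> 1"
    and K1: "K \<ge> 1"
    and low: "\<And>t. t > 0 \<Longrightarrow> a t * a2 t / (a1 t)^2 \<ge> - K"
    and Cb: "\<And>t. t > 0 \<Longrightarrow> \<bar>a3 t * (a t)^2 / (a1 t)^3\<bar> \<le> C"
begin

lemma aless: "0 \<le> s \<Longrightarrow> s < t \<Longrightarrow> a s < a t"
  using smono by (auto simp: strict_mono_on_def)

lemma apos: "t > 0 \<Longrightarrow> a t > 0"
  using aless[of 0 t] a0 by simp

lemma anonneg: "t \<ge> 0 \<Longrightarrow> a t \<ge> 0"
  using apos a0 by (cases "t = 0") (auto simp: less_le)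

lemma aleq: "0 \<le> s \<Longrightarrow> s \<le> t \<Longrightarrow> a s \<le> a t"
  using aless by (cases "s = t") (auto simp: less_le)

lemma a1pos: "t > 0 \<Longrightarrow> a1 t > 0"
proof (rule ccontr)
  assume t: "t > 0" and "\<not> a1 t > 0"
  then have "a1 t < 0" using nz[OF t] by linarith
  from DERIV_neg_dec_right[OF d1[OF t] this] obtain d where d: "d > 0"
    "\<And>h. h > 0 \<Longrightarrow> h < d \<Longrightarrow> a (t + h) < a t" by blast
  have "a t < a (t + d/2)" using aless[of t "t + d/2"] t d by simp
  with d(2)[of "d/2"] d(1) show False by simp
qed

lemma a_isCont: "t > 0 \<Longrightarrow> isCont a t" using d1 DERIV_isCont by blast
lemma a1_isCont: "t > 0 \<Longrightarrow> isCont a1 t" using d2 DERIV_isCont by blast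
lemma a2_isCont: "t > 0 \<Longrightarrow> isCont a2 t" using d3 DERIV_isCont by blast

definition b where "b = the_inv_into {0..} a"

lemma inj_a: "inj_on a {0..}" using smono strict_mono_on_imp_inj_on by blast
lemma img_a: "a ` {0..} = {0..}" using abij by (simp add: bij_betw_def)

lemma b_a: "t \<ge> 0 \<Longrightarrow> b (a t) = t"
  unfolding b_def by (rule the_inv_into_f_f[OF inj_a]) simp

lemma a_b: "y \<ge> 0 \<Longrightarrow> a (b y) = y"
  unfolding b_def by (rule f_the_inv_into_f[OF inj_a]) (simp add: img_a)

lemma b_nonneg: "y \<ge> 0 \<Longrightarrow> b y \<ge> 0"
  unfolding b_def using the_inv_into_into[OF inj_a, of y "{0..}"] img_a by auto

lemma b_less: "0 \<le> y1 \<Longrightarrow> y1 < y2 \<Longrightarrow> b y1 < b y2"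
proof (rule ccontr)
  assume h: "0 \<le> y1" "y1 < y2" "\<not> b y1 < b y2"
  then have "a (b y2) \<le> a (b y1)" using aleq[of "b y2" "b y1"] b_nonneg by auto
  then show False using h a_b[of y1] a_b[of y2] by simp
qed

lemma b_pos: "y > 0 \<Longrightarrow> b y > 0"
  using b_less[of 0 y] b_a[of 0] a0 by simp

lemma b_isCont: "y > 0 \<Longrightarrow> isCont b y"
proof -
  assume y: "y > 0"
  have "isCont b (a (b y))"
  proof (rule isCont_inverse_function[where d = "b y / 2" and f = a and g = b and x = "b y"])
    show "0 < b y / 2" using b_pos[OF y] by simp
  next
    fix z assume "\<bar>z - b y\<bar> \<le> b y / 2"
    then have "z > 0" using b_pos[OF y] by linarith
    then show "b (a z) = z" using b_a by auto
  next
    fix z assume "\<bar>z - b y\<bar> \<le> b y / 2"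
    then have "z > 0" using b_pos[OF y] by linarith
    then show "isCont a z" using a_isCont by auto
  qed
  then show ?thesis using a_b y by simp
qed

lemma b_deriv: "y > 0 \<Longrightarrow> (b has_real_derivative inverse (a1 (b y))) (at y)"
proof -
  assume y: "y > 0"
  show ?thesis
  proof (rule DERIV_inverse_function[where f = a and a = 0 and b = "y + 1"])
    show "(a has_real_derivative a1 (b y)) (at (b y))" using d1 b_pos y by blast
    show "a1 (b y) \<noteq> 0" using nz b_pos y by blast
    show "\<And>z. 0 < z \<Longrightarrow> z < y + 1 \<Longrightarrow> a (b z) = z" using a_b by auto
    show "isCont b y" using b_isCont y by blast
  qed (use y in auto)
qed

lemma ratio_mono: assumes "0 < s" "s \<le> t" shows "a s / a1 s \<le> a t / a1 t"
proof (rule DERIV_nonneg_imp_nondecreasing[OF assms(2)])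
  fix x assume x: "s \<le> x" "x \<le> t"
  then have x0: "x > 0" using assms by linarith
  have a1x: "a1 x > 0" using a1pos x0 .
  have "((\<lambda>x. a x / a1 x) has_real_derivative (a1 x * a1 x - a x * a2 x) / (a1 x)^2) (at x)"
    using DERIV_divide[OF d1[OF x0] d2[OF x0]] a1x by (simp add: power2_eq_square)
  moreover have "0 \<le> (a1 x * a1 x - a x * a2 x) / (a1 x)^2"
  proof -
    have "a x * a2 x \<le> (a1 x)^2" using up[OF x0] a1x by (simp add: divide_le_eq)
    then show ?thesis by (simp add: power2_eq_square)
  qed
  ultimately show "\<exists>y. ((\<lambda>x. a x / a1 x) has_real_derivative y) (at x) \<and> 0 \<le> y" by blast
qed

lemma ratio_nonneg: "t > 0 \<Longrightarrow> a t / a1 t \<ge> 0"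
  using apos a1pos by (simp add: less_imp_le)

lemma absK: "t > 0 \<Longrightarrow> \<bar>a t * a2 t / (a1 t)^2\<bar> \<le> K"
proof -
  assume t: "t > 0"
  have "a t * a2 t / (a1 t)^2 \<le> K" using up[OF t] K1 by linarith
  then show ?thesis using low[OF t] by (simp add: abs_le_iff)
qed

lemma C_nonneg: "C \<ge> 0"
  by (rule order_trans[OF abs_ge_zero Cb[of 1]]) simp

definition q where "q t = a2 t / (a1 t)^3"
definition dq where "dq t = a3 t / (a1 t)^3 - 3 * (a2 t)^2 / (a1 t)^4"

lemma q_deriv: "t > 0 \<Longrightarrow> (q has_real_derivative dq t) (at t)"
proof -
  assume t: "t > 0"
  have a1t: "a1 t > 0" using a1pos t .
  have "((\<lambda>t. a2 t / (a1 t)^3) has_real_derivative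
      (a3 t * (a1 t)^3 - a2 t * (3 * (a1 t)^2 * a2 t)) / ((a1 t)^3 * (a1 t)^3)) (at t)"
  proof (rule DERIV_divide[OF d3[OF t]])
    show "((\<lambda>t. (a1 t)^3) has_real_derivative 3 * (a1 t)^2 * a2 t) (at t)"
      by (auto intro!: derivative_eq_intros d2[OF t])
  qed (use a1t in auto)
  moreover have "(a3 t * (a1 t)^3 - a2 t * (3 * (a1 t)^2 * a2 t)) / ((a1 t)^3 * (a1 t)^3) = dq t"
    using a1t by (simp add: dq_def field_simps power2_eq_square power3_eq_cube power4_eq_xxxx)
  ultimately show ?thesis unfolding q_def[abs_def] by simp
qed

lemma q_isCont: "t > 0 \<Longrightarrow> isCont q t"
  using q_deriv DERIV_isCont by blast

lemma q_bound: assumes "0 < t" "t \<le> T" shows "\<bar>q t\<bar> * (a t)^2 \<le> K * (a T / a1 T)"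
proof -
  have a1t: "a1 t > 0" using a1pos assms by simp
  have at: "a t > 0" using apos assms by simp
  have "\<bar>q t\<bar> * (a t)^2 = \<bar>a t * a2 t / (a1 t)^2\<bar> * (a t / a1 t)"
    using a1t at by (simp add: q_def abs_mult field_simps power2_eq_square power3_eq_cube)
  also have "\<dots> \<le> K * (a T / a1 T)"
    by (rule mult_mono) (use absK[OF assms(1)] ratio_mono[OF assms] K1 at a1t in auto)
  finally show ?thesis .
qed

lemma dq_bound: assumes "0 < t" "t \<le> T" shows "\<bar>dq t\<bar> * (a t)^3 / a1 t \<le> (C + 3 * K^2) * (a T / a1 T)"
proof -
  have a1t: "a1 t > 0" using a1pos assms by simp
  have at: "a t > 0" using apos assms by simp
  define r where "r = a t * a2 t / (a1 t)^2"
  define c3 where "c3 = a3 t * (a t)^2 / (a1 t)^3"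
  have e: "dq t * (a t)^3 / a1 t = (c3 - 3 * r^2) * (a t / a1 t)"
    using a1t at by (simp add: dq_def r_def c3_def field_simps power2_eq_square power3_eq_cube power4_eq_xxxx)
  have "\<bar>dq t\<bar> * (a t)^3 / a1 t = \<bar>dq t * (a t)^3 / a1 t\<bar>"
    using a1t at by (simp add: abs_mult abs_divide)
  also have "\<dots> = \<bar>c3 - 3 * r^2\<bar> * (a t / a1 t)"
    unfolding e using a1t at by (simp add: abs_mult abs_divide)
  finally have "\<bar>dq t\<bar> * (a t)^3 / a1 t = \<bar>c3 - 3 * r^2\<bar> * (a t / a1 t)" .
  also have "\<dots> \<le> (C + 3 * K^2) * (a T / a1 T)"
  proof (rule mult_mono)
    have "\<bar>r\<bar> \<le> K" using absK[OF assms(1)] by (simp add: r_def)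
    then have "r^2 \<le> K^2" by (metis abs_le_square_iff power2_abs abs_of_nonneg K1 order_trans zero_le_one)
    moreover have "\<bar>c3\<bar> \<le> C" using Cb[OF assms(1)] by (simp add: c3_def)
    ultimately show "\<bar>c3 - 3 * r^2\<bar> \<le> C + 3 * K^2" by (simp add: abs_le_iff) (smt (verit) zero_le_power2)
    show "a t / a1 t \<le> a T / a1 T" using ratio_mono[OF assms] .
  qed (use at a1t C_nonneg in auto)
  finally show ?thesis .
qed

end



lemma sqrt_one_minus_sq_pos: "0 \<le> u \<Longrightarrow> u < (1::real) \<Longrightarrow> sqrt (1 - u^2) > 0"
  using abs_square_less_1[of u] by simp

lemma sqrt_one_minus_sq_nonneg: "0 \<le> u \<Longrightarrow> u \<le> (1::real) \<Longrightarrow> sqrt (1 - u^2) \<ge> 0"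
  using power_le_one[of u 2] by simp

lemma sqrt_one_minus_sq_sq: "0 \<le> u \<Longrightarrow> u \<le> (1::real) \<Longrightarrow> (sqrt (1 - u^2))^2 = 1 - u^2"
  using power_le_one[of u 2] by simp

definition h1 :: "real \<Rightarrow> real" where "h1 u = 1 / (sqrt (1 - u^2) * (1 + sqrt (1 - u^2)))"
definition h2 :: "real \<Rightarrow> real" where "h2 u = 1 / (u^2 * sqrt (1 - u^2))"

lemma h1_nonneg: "0 \<le> u \<Longrightarrow> u \<le> 1 \<Longrightarrow> h1 u \<ge> 0"
  using sqrt_one_minus_sq_nonneg[of u] by (simp add: h1_def)
lemma h2_nonneg: "0 \<le> u \<Longrightarrow> u \<le> 1 \<Longrightarrow> h2 u \<ge> 0"
  using sqrt_one_minus_sq_nonneg[of u] by (simp add: h2_def)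

lemma h1_eq: assumes "0 < u" "u < 1" shows "(1 / sqrt (1 - u^2) - 1) / u^2 = h1 u"
proof -
  define s where "s = sqrt (1 - u^2)"
  have s: "s > 0" using sqrt_one_minus_sq_pos assms by (simp add: s_def)
  have ss: "s^2 = 1 - u^2" using sqrt_one_minus_sq_sq assms by (simp add: s_def)
  have u2: "u^2 = (1 - s) * (1 + s)" using ss by (simp add: algebra_simps power2_eq_square)
  have s1: "1 - s > 0" using u2 assms s by (smt (verit) mult_nonpos_nonneg zero_less_power)
  have "(1 / s - 1) / ((1 - s) * (1 + s)) = 1 / (s * (1 + s))"
  proof -
    have "(1 / s - 1) = (1 - s) / s" using s by (simp add: field_simps)
    have "(1 - s) / s / ((1 - s) * (1 + s)) = 1 / (s * (1 + s))"
      using s s1 by (smt (verit) divide_divide_eq_left mult.commute nonzero_divide_mult_cancel_left)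
    then show ?thesis using \<open>(1 / s - 1) = (1 - s) / s\<close> by simp
  qed
  then have "(1 / s - 1) / u^2 = 1 / (s * (1 + s))" by (simp only: u2)
  then show ?thesis by (simp add: h1_def s_def)
qed

lemma h1_integrable: "h1 integrable_on {0..1}"
proof -
  define G where "G u = u / (1 + sqrt (1 - u^2))" for u :: real
  have "(h1 has_integral G 1 - G 0) {0..1}"
  proof (rule fundamental_theorem_of_calculus_interior)
    show "continuous_on {0..1} G" unfolding G_def
    proof (intro continuous_intros ballI)
      fix u :: real assume "u \<in> {0..1}"
      then have "sqrt (1 - u^2) \<ge> 0" using sqrt_one_minus_sq_nonneg by auto
      then show "1 + sqrt (1 - u^2) \<noteq> 0" by linarith
    qed
    fix u :: real assume u: "u \<in> {0<..<1}"
    define s where "s = sqrt (1 - u^2)"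
    have s: "s > 0" using sqrt_one_minus_sq_pos u by (simp add: s_def)
    have ss: "s^2 = 1 - u^2" using sqrt_one_minus_sq_sq u by (simp add: s_def)
    have s': "1 + sqrt (1 - u*u) \<noteq> 0" using s unfolding s_def power2_eq_square by linarith
    have D: "(G has_real_derivative ((1 + s) - u * (- (2 * u) / (2 * s))) / (1 + s)^2) (at u)"
      unfolding G_def s_def using s u s'
      by (auto intro!: derivative_eq_intros simp: s_def power2_eq_square field_simps)
    have "((1 + s) - u * (- (2 * u) / (2 * s))) / (1 + s)^2 = (s + s^2 + u^2) / (s * (1 + s)^2)"
      using s by (simp add: field_simps power2_eq_square)
    also have "\<dots> = (1 + s) / (s * (1 + s)^2)" using ss by simp
    also have "\<dots> = 1 / (s * (1 + s))" using s by (simp add: power2_eq_square)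
    also have "\<dots> = h1 u" unfolding h1_def s_def ..
    finally show "(G has_vector_derivative h1 u) (at u)"
      using D by (simp add: has_real_derivative_iff_has_vector_derivative)
  qed simp
  then show ?thesis by blast
qed

lemma h2_integrable: assumes "0 < l" shows "h2 integrable_on {l..1}"
proof (cases "l \<le> 1")
  case True
  define G where "G u = - sqrt (1 - u^2) / u" for u :: real
  have "(h2 has_integral G 1 - G l) {l..1}"
  proof (rule fundamental_theorem_of_calculus_interior[OF True])
    show "continuous_on {l..1} G" unfolding G_def
      using assms by (intro continuous_intros) auto
    fix u :: real assume u: "u \<in> {l<..<1}"
    then have u0: "u > 0" using assms by simp
    define s where "s = sqrt (1 - u^2)"
    have s: "s > 0" using sqrt_one_minus_sq_pos u u0 by (simp add: s_def)
    have ss: "s^2 = 1 - u^2" using sqrt_one_minus_sq_sq u u0 by (simp add: s_def)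
    have D: "(G has_real_derivative (u * u / s + s) / (u * u)) (at u)"
      unfolding G_def s_def using s u0 u sqrt_one_minus_sq_pos[of u]
      by (auto intro!: derivative_eq_intros simp: s_def power2_eq_square field_simps)
    have "(u * u / s + s) / (u * u) = (u^2 + s^2) / (u^2 * s)"
      using s u0 by (simp add: field_simps power2_eq_square)
    also have "\<dots> = h2 u" unfolding h2_def s_def[symmetric] using ss by simp
    finally show "(G has_vector_derivative h2 u) (at u)"
      using D by (simp add: has_real_derivative_iff_has_vector_derivative)
  qed
  then show ?thesis by blast
next
  case False then show ?thesis by (simp add: integrable_on_empty)
qed




context sf begin

definition phi where "phi x = q (b x)"
definition dphi where "dphi x = dq (b x) / a1 (b x)"

lemma phi_deriv: "x > 0 \<Longrightarrow> (phi has_real_derivative dphi x) (at x)"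
proof -
  assume x: "x > 0"
  have "((\<lambda>x. q (b x)) has_real_derivative dq (b x) * inverse (a1 (b x))) (at x)"
    by (rule DERIV_chain2[OF q_deriv b_deriv]) (use x b_pos in auto)
  then show ?thesis by (simp add: phi_def[abs_def] dphi_def divide_inverse)
qed

lemma phi_isCont: "x > 0 \<Longrightarrow> isCont phi x"
  using phi_deriv DERIV_isCont by blast

definition RR where "RR Y = a (b Y) / a1 (b Y)"
definition MM where "MM Y = (K + C + 3 * K^2) * RR Y"

lemma RR_nonneg: "Y > 0 \<Longrightarrow> RR Y \<ge> 0"
  unfolding RR_def using ratio_nonneg b_pos by auto

lemma phi_bound: assumes "0 < x" "x \<le> Y" shows "\<bar>phi x\<bar> * x^2 \<le> MM Y"
proof -
  have t: "0 < b x" "b x \<le> b Y" using b_pos b_less[of x Y] assms by (auto simp: less_imp_le le_less)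
  have "\<bar>phi x\<bar> * x^2 = \<bar>q (b x)\<bar> * (a (b x))^2" using a_b assms by (simp add: phi_def)
  also have "\<dots> \<le> K * RR Y" unfolding RR_def by (rule q_bound[OF t])
  also have "\<dots> \<le> MM Y" unfolding MM_def using RR_nonneg[of Y] assms C_nonneg K1
    by (intro mult_right_mono) auto
  finally show ?thesis .
qed

lemma dphi_bound: assumes "0 < x" "x \<le> Y" shows "\<bar>dphi x\<bar> * x^3 \<le> MM Y"
proof -
  have t: "0 < b x" "b x \<le> b Y" using b_pos b_less[of x Y] assms by (auto simp: less_imp_le le_less)
  have a1p: "a1 (b x) > 0" using a1pos t by simp
  have "\<bar>dphi x\<bar> * x^3 = \<bar>dq (b x)\<bar> * (a (b x))^3 / a1 (b x)" using a_b assms a1p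
    by (simp add: dphi_def abs_divide)
  also have "\<dots> \<le> (C + 3 * K^2) * RR Y" unfolding RR_def by (rule dq_bound[OF t])
  also have "\<dots> \<le> MM Y" unfolding MM_def using RR_nonneg[of Y] assms K1
    by (intro mult_right_mono) auto
  finally show ?thesis .
qed

definition beta where "beta x0 X u = sqrt (X^2 - x0^2) / (X * sqrt (1 - u^2)) - 1"
definition dbeta where "dbeta x0 X u = x0^2 / (X^2 * sqrt (X^2 - x0^2) * sqrt (1 - u^2))"
definition Fu where "Fu x0 X u = X * phi (X * u) * max (beta x0 X u) 0"
definition Du where "Du x0 X u = (if x0 / X < u then
   (phi (X * u) + X * u * dphi (X * u)) * beta x0 X u + X * phi (X * u) * dbeta x0 X u else 0)"

lemma beta_deriv: assumes "0 \<le> x0" "x0 < X" "0 \<le> u" "u < 1"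
  shows "((\<lambda>X. beta x0 X u) has_real_derivative dbeta x0 X u) (at X)"
proof -
  define s where "s = sqrt (1 - u^2)"
  have s: "s > 0" using sqrt_one_minus_sq_pos assms by (simp add: s_def)
  have d: "X^2 - x0^2 > 0" using assms by (simp add: power_strict_mono)
  define r where "r = sqrt (X^2 - x0^2)"
  have r: "r > 0" "r^2 = X^2 - x0^2" using d by (auto simp: r_def)
  have i: "((\<lambda>X. X^2 - x0^2) has_real_derivative 2 * X) (at X)"
    by (auto intro!: derivative_eq_intros)
  have D1: "((\<lambda>X. sqrt (X^2 - x0^2)) has_real_derivative inverse (sqrt (X^2 - x0^2)) / 2 * (2 * X)) (at X)"
    by (rule DERIV_chain2[OF DERIV_real_sqrt[OF d] i])
  have D2: "((\<lambda>X. X * s) has_real_derivative 1 * s) (at X)"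
    by (rule DERIV_cmult_right[OF DERIV_ident])
  have D3: "((\<lambda>X. sqrt (X^2 - x0^2) / (X * s)) has_real_derivative
     ((inverse (sqrt (X^2 - x0^2)) / 2 * (2 * X)) * (X * s) - sqrt (X^2 - x0^2) * (1 * s)) / ((X * s) * (X * s))) (at X)"
    by (rule DERIV_divide[OF D1 D2]) (use s assms in auto)
  have D4: "((\<lambda>X. sqrt (X^2 - x0^2) / (X * s) - 1) has_real_derivative
     ((inverse (sqrt (X^2 - x0^2)) / 2 * (2 * X)) * (X * s) - sqrt (X^2 - x0^2) * (1 * s)) / ((X * s) * (X * s)) - 0) (at X)"
    by (rule DERIV_diff[OF D3 DERIV_const])
  have "((inverse r / 2 * (2 * X)) * (X * s) - r * (1 * s)) / ((X * s) * (X * s)) - 0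
      = (X^2 - r^2) / (X^2 * r * s)"
    using r s assms by (simp add: field_simps power2_eq_square)
  also have "\<dots> = dbeta x0 X u" unfolding dbeta_def r(2) s_def[symmetric] r_def[symmetric] by simp
  finally show ?thesis using D4 unfolding beta_def[abs_def] r_def s_def by simp
qed

lemma P_deriv: assumes "X > 0" "u > 0"
  shows "((\<lambda>X. X * phi (X * u)) has_real_derivative phi (X * u) + X * u * dphi (X * u)) (at X)"
proof -
  have i: "((\<lambda>X. X * u) has_real_derivative 1 * u) (at X)"
    by (rule DERIV_cmult_right[OF DERIV_ident])
  have D: "((\<lambda>X. phi (X * u)) has_real_derivative dphi (X * u) * (1 * u)) (at X)"
    by (rule DERIV_chain2[OF phi_deriv i]) (use assms in simp)
  have "((\<lambda>X. X * phi (X * u)) has_real_derivative 1 * phi (X * u) + (dphi (X * u) * (1 * u)) * X) (at X)"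
    by (rule DERIV_mult[OF DERIV_ident D])
  then show ?thesis by (simp add: algebra_simps)
qed

lemma beta_le: assumes "0 \<le> x0" "x0 \<le> X" "0 < X" "0 \<le> u" "u < 1"
  shows "beta x0 X u \<le> 1 / sqrt (1 - u^2) - 1"
proof -
  have s: "sqrt (1 - u^2) > 0" using sqrt_one_minus_sq_pos assms by simp
  have "sqrt (X^2 - x0^2) \<le> sqrt (X^2)" by (rule real_sqrt_le_mono) simp
  also have "sqrt (X^2) = X" using assms by simp
  finally have "sqrt (X^2 - x0^2) \<le> X" .
  then have "sqrt (X^2 - x0^2) / (X * sqrt (1 - u^2)) \<le> X / (X * sqrt (1 - u^2))"
    using s assms by (intro divide_right_mono) auto
  then show ?thesis using assms s unfolding beta_def by simp
qed

lemma beta_pos_iff: assumes "0 \<le> x0" "x0 \<le> X" "0 < X" "0 \<le> u" "u < 1"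
  shows "beta x0 X u > 0 \<longleftrightarrow> x0 < X * u"
proof -
  have s: "sqrt (1 - u^2) > 0" using sqrt_one_minus_sq_pos assms by simp
  have Xs: "X * sqrt (1 - u^2) > 0" using s assms by simp
  have "beta x0 X u > 0 \<longleftrightarrow> 1 < sqrt (X^2 - x0^2) / (X * sqrt (1 - u^2))"
    unfolding beta_def by simp
  also have "\<dots> \<longleftrightarrow> X * sqrt (1 - u^2) < sqrt (X^2 - x0^2)"
    using Xs by (simp add: pos_less_divide_eq)
  also have "X * sqrt (1 - u^2) = sqrt (X^2 * (1 - u^2))" using assms by (simp add: real_sqrt_mult)
  also have "sqrt (X^2 * (1 - u^2)) < sqrt (X^2 - x0^2) \<longleftrightarrow> X^2 * (1 - u^2) < X^2 - x0^2"
    by (rule real_sqrt_less_iff)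
  also have "\<dots> \<longleftrightarrow> x0^2 < (X * u)^2" by (simp add: algebra_simps power_mult_distrib)
  also have "\<dots> \<longleftrightarrow> x0 < X * u"
  proof -
    have "X * u \<ge> 0" using assms by simp
    then have "(X * u)^2 \<le> x0^2 \<longleftrightarrow> X * u \<le> x0" using assms(1) by (rule power_mono_iff) simp
    then show ?thesis by (simp add: not_le[symmetric])
  qed
  finally show ?thesis .
qed

end



lemma sqrt_scale: assumes "X > 0" "0 \<le> y" "y \<le> X"
  shows "X * sqrt (1 - (y / X)^2) = sqrt (X^2 - y^2)"
proof -
  have "X * sqrt (1 - (y / X)^2) = sqrt (X^2) * sqrt (1 - (y / X)^2)" using assms by simp
  also have "\<dots> = sqrt (X^2 * (1 - (y / X)^2))" by (simp add: real_sqrt_mult)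
  also have "X^2 * (1 - (y / X)^2) = X^2 - y^2" using assms by (simp add: field_simps power2_eq_square)
  finally show ?thesis .
qed

context sf begin

lemma img: assumes "0 \<le> c" "c < s"
  shows "(\<lambda>t. a t / a s) ` {c<..<s} = {a c / a s<..<1}"
proof
  have as: "a s > 0" using apos assms by simp
  show "(\<lambda>t. a t / a s) ` {c<..<s} \<subseteq> {a c / a s<..<1}"
  proof
    fix u assume "u \<in> (\<lambda>t. a t / a s) ` {c<..<s}"
    then obtain t where t: "c < t" "t < s" "u = a t / a s" by auto
    have "a c < a t" "a t < a s" using aless t assms by auto
    then show "u \<in> {a c / a s<..<1}" using t as by (simp add: divide_strict_right_mono)
  qed
  show "{a c / a s<..<1} \<subseteq> (\<lambda>t. a t / a s) ` {c<..<s}"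
  proof
    fix u assume u: "u \<in> {a c / a s<..<1}"
    define y where "y = u * a s"
    have y: "a c < y" "y < a s" using u as by (auto simp: y_def field_simps)
    have y0: "y \<ge> 0" using y(1) anonneg[OF assms(1)] by linarith
    have "b (a c) < b y" using b_less[OF anonneg[OF assms(1)] y(1)] .
    then have t1: "c < b y" using b_a assms by simp
    have "b y < b (a s)" using b_less[OF y0 y(2)] .
    then have t2: "b y < s" using b_a assms by simp
    have "u = a (b y) / a s" using a_b[OF y0] as by (simp add: y_def)
    then show "u \<in> (\<lambda>t. a t / a s) ` {c<..<s}" using t1 t2 by auto
  qed
qed

lemma transport:
  assumes "0 \<le> c" "c < s" and G: "G absolutely_integrable_on {a c / a s<..<1}"
  shows "(\<lambda>t. (a1 t / a s) * G (a t / a s)) absolutely_integrable_on {c<..<s}"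
    and "integral {c<..<s} (\<lambda>t. (a1 t / a s) * G (a t / a s)) = integral {a c / a s<..<1} G"
proof -
  have as: "a s > 0" using apos assms by simp
  have der: "((\<lambda>t. a t / a s) has_real_derivative a1 t / a s) (at t within {c<..<s})"
    if "t \<in> {c<..<s}" for t
    by (rule has_field_derivative_at_within, rule DERIV_cdivide, rule d1) (use that assms in auto)
  have inj: "inj_on (\<lambda>t. a t / a s) {c<..<s}"
  proof (rule inj_onI)
    fix x y assume "x \<in> {c<..<s}" "y \<in> {c<..<s}" "a x / a s = a y / a s"
    then show "x = y" using inj_a as assms by (auto simp: inj_on_def)
  qed
  have eq: "(\<lambda>t. \<bar>a1 t / a s\<bar> * G (a t / a s)) absolutely_integrable_on {c<..<s} \<and>
     integral {c<..<s} (\<lambda>t. \<bar>a1 t / a s\<bar> * G (a t / a s)) = integral {a c / a s<..<1} G"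
    using has_absolute_integral_change_of_variables_1'[OF _ der inj, of "G" "integral {a c / a s<..<1} G"]
      img[OF assms(1,2)] G by simp
  have cong: "\<And>t. t \<in> {c<..<s} \<Longrightarrow> \<bar>a1 t / a s\<bar> * G (a t / a s) = (a1 t / a s) * G (a t / a s)"
  proof -
    fix t assume "t \<in> {c<..<s}"
    then have "a1 t > 0" using a1pos assms by auto
    then show "\<bar>a1 t / a s\<bar> * G (a t / a s) = (a1 t / a s) * G (a t / a s)" using as by simp
  qed
  show "(\<lambda>t. (a1 t / a s) * G (a t / a s)) absolutely_integrable_on {c<..<s}"
    by (rule iffD1[OF set_integrable_cong[OF refl refl cong] conjunct1[OF eq]])
  show "integral {c<..<s} (\<lambda>t. (a1 t / a s) * G (a t / a s)) = integral {a c / a s<..<1} G"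
    by (rule trans[OF sym[OF integral_cong[OF cong]] conjunct2[OF eq]])
qed

end



lemma cont_dom_absint:
  fixes f h :: "real \<Rightarrow> real"
  assumes "continuous_on {l<..<r} f" "h integrable_on {l<..<r}" "\<And>u. u \<in> {l<..<r} \<Longrightarrow> \<bar>f u\<bar> \<le> h u"
  shows "f absolutely_integrable_on {l<..<r}"
  by (rule measurable_bounded_by_integrable_imp_absolutely_integrable[OF
        continuous_imp_measurable_on_sets_lebesgue[OF assms(1)]]) (use assms in auto)

lemma h1_integrable_Ioo: "0 \<le> l \<Longrightarrow> h1 integrable_on {l<..<1}"
  using integrable_on_subinterval[OF h1_integrable, of l 1] integrable_on_Icc_iff_Ioo by auto

lemma h2_integrable_Ioo: "0 < l \<Longrightarrow> h2 integrable_on {l<..<1}"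
  using h2_integrable[of l] integrable_on_Icc_iff_Ioo by auto

context sf begin

lemma MM_nonneg: "Y > 0 \<Longrightarrow> MM Y \<ge> 0"
  unfolding MM_def using RR_nonneg[of Y] K1 C_nonneg by (intro mult_nonneg_nonneg) auto

lemma Fu_bound: assumes "0 \<le> x0" "x0 \<le> X" "0 < X" "0 < u" "u < 1" "X * u \<le> Y"
  shows "\<bar>Fu x0 X u\<bar> \<le> MM Y / X * h1 u"
proof -
  define \<rho> where "\<rho> = 1 / sqrt (1 - u^2) - 1"
  have s: "sqrt (1 - u^2) > 0" using sqrt_one_minus_sq_pos assms by simp
  have s1: "sqrt (1 - u^2) \<le> 1" using assms by simp
  have \<rho>0: "\<rho> \<ge> 0" using s s1 by (simp add: \<rho>_def)
  have m: "0 \<le> max (beta x0 X u) 0" "max (beta x0 X u) 0 \<le> \<rho>"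
    using beta_le[of x0 X u] assms \<rho>0 by (auto simp: \<rho>_def)
  have Xu: "X * u > 0" using assms by simp
  have p: "\<bar>phi (X * u)\<bar> \<le> MM Y / (X * u)^2"
  proof -
    have "(X * u)^2 > 0" using Xu by (intro zero_less_power)
    then show ?thesis using phi_bound[OF Xu assms(6)] by (simp add: pos_le_divide_eq)
  qed
  have "\<bar>Fu x0 X u\<bar> = X * \<bar>phi (X * u)\<bar> * max (beta x0 X u) 0"
    unfolding Fu_def using assms m by (simp add: abs_mult)
  also have "\<dots> \<le> X * (MM Y / (X * u)^2) * \<rho>"
  proof -
    have "MM Y \<ge> 0" using MM_nonneg[of Y] assms Xu by linarith
    then show ?thesis by (intro mult_mono mult_left_mono p m) (use assms in auto)
  qed
  also have "\<dots> = MM Y / X * (\<rho> / u^2)" using assms by (simp add: field_simps power2_eq_square)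
  also have "\<rho> / u^2 = h1 u" unfolding \<rho>_def using h1_eq assms by simp
  finally show ?thesis .
qed

lemma Fu_cont: assumes "0 \<le> l" "0 < X"
  shows "continuous_on {l<..<1} (Fu x0 X)"
proof -
  have "continuous_on {l<..<1} (\<lambda>u. phi (X * u))"
  proof (rule continuous_at_imp_continuous_on, rule ballI)
    fix u assume "u \<in> {l<..<1}"
    then have "X * u > 0" using assms by simp
    then show "isCont (\<lambda>u. phi (X * u)) u"
      by (intro isCont_o2[OF _ phi_isCont]) (auto intro!: continuous_intros)
  qed
  moreover have "continuous_on {l<..<1} (\<lambda>u. beta x0 X u)"
    unfolding beta_def
  proof (intro continuous_intros ballI)
    fix u assume "u \<in> {l<..<1}"
    then have "sqrt (1 - u^2) > 0" using sqrt_one_minus_sq_pos assms by simp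
    then show "X * sqrt (1 - u^2) \<noteq> 0" using assms by simp
  qed
  ultimately show ?thesis unfolding Fu_def[abs_def] by (intro continuous_intros)
qed

lemma Fu_absint: assumes "0 \<le> x0" "x0 \<le> X" "0 < X" "0 \<le> l"
  shows "Fu x0 X absolutely_integrable_on {l<..<1}"
proof (rule cont_dom_absint[OF Fu_cont[OF assms(4,3)]])
  show "(\<lambda>u. MM X / X * h1 u) integrable_on {l<..<1}"
    using h1_integrable_Ioo[OF assms(4)] by (rule integrable_on_mult_right)
  fix u assume u: "u \<in> {l<..<1}"
  show "\<bar>Fu x0 X u\<bar> \<le> MM X / X * h1 u"
    by (rule Fu_bound) (use u assms in auto)
qed

lemma beta_at: assumes "0 \<le> x0" "x0 \<le> y" "y < X"
  shows "beta x0 X (y / X) = sqrt (X^2 - x0^2) / sqrt (X^2 - y^2) - 1"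
    and "beta x0 X (y / X) \<ge> 0"
proof -
  have X: "X > 0" using assms by linarith
  have e: "X * sqrt (1 - (y / X)^2) = sqrt (X^2 - y^2)" by (rule sqrt_scale) (use assms X in auto)
  show b: "beta x0 X (y / X) = sqrt (X^2 - x0^2) / sqrt (X^2 - y^2) - 1"
    unfolding beta_def e ..
  have yx: "y^2 < X^2" using assms by (simp add: power_strict_mono)
  have "sqrt (X^2 - y^2) \<le> sqrt (X^2 - x0^2)" using assms by (simp add: power_mono)
  moreover have "sqrt (X^2 - y^2) > 0" using yx by simp
  ultimately show "beta x0 X (y / X) \<ge> 0" unfolding b by simp
qed

lemma fpos_eq: assumes "0 \<le> c" "c < s"
  shows "f_pos a a1 a2 s c = integral {a c / a s<..<1} (Fu (a c) (a s))"
proof -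
  have as: "a s > 0" using apos assms by simp
  have ac: "0 \<le> a c" "a c < a s" using anonneg aless assms by auto
  have "f_pos a a1 a2 s c = integral {c<..<s} (\<lambda>t. a2 t / (a1 t)\<^sup>2 *
        (sqrt ((a s)\<^sup>2 - (a c)\<^sup>2) / sqrt ((a s)\<^sup>2 - (a t)\<^sup>2) - 1))"
    unfolding f_pos_def by (rule integral_open_interval_real)
  also have "\<dots> = integral {c<..<s} (\<lambda>t. (a1 t / a s) * Fu (a c) (a s) (a t / a s))"
  proof (rule integral_cong)
    fix t assume t: "t \<in> {c<..<s}"
    then have t0: "t > 0" using assms by simp
    have at: "a c \<le> a t" "a t < a s" using aless aleq t assms by auto
    have a1t: "a1 t > 0" using a1pos t0 .
    have bt: "beta (a c) (a s) (a t / a s) = sqrt ((a s)^2 - (a c)^2) / sqrt ((a s)^2 - (a t)^2) - 1"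
      "beta (a c) (a s) (a t / a s) \<ge> 0" using beta_at[OF ac(1) at] by auto
    have "Fu (a c) (a s) (a t / a s) = a s * q t * (sqrt ((a s)^2 - (a c)^2) / sqrt ((a s)^2 - (a t)^2) - 1)"
      unfolding Fu_def using bt as b_a[of t] t0 by (simp add: phi_def)
    then show "a2 t / (a1 t)\<^sup>2 * (sqrt ((a s)\<^sup>2 - (a c)\<^sup>2) / sqrt ((a s)\<^sup>2 - (a t)\<^sup>2) - 1)
        = (a1 t / a s) * Fu (a c) (a s) (a t / a s)"
      using as a1t by (simp add: q_def power2_eq_square power3_eq_cube)
  qed
  also have "\<dots> = integral {a c / a s<..<1} (Fu (a c) (a s))"
    by (rule transport(2)[OF assms Fu_absint]) (use ac as in auto)
  finally show ?thesis .
qed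

end



lemma max0_lip: "\<bar>max p 0 - max q 0\<bar> \<le> \<bar>p - q\<bar>" for p q :: real
  by (auto simp: max_def)

lemma lip_mvt:
  fixes f f' :: "real \<Rightarrow> real"
  assumes "\<And>\<xi>. \<xi> \<in> {min x y..max x y} \<Longrightarrow> (f has_real_derivative f' \<xi>) (at \<xi>)"
    and "\<And>\<xi>. \<xi> \<in> {min x y..max x y} \<Longrightarrow> \<bar>f' \<xi>\<bar> \<le> L"
  shows "\<bar>f y - f x\<bar> \<le> L * \<bar>y - x\<bar>"
proof (cases x y rule: linorder_cases)
  case less
  obtain z where z: "x < z" "z < y" "f y - f x = (y - x) * f' z"
    using MVT2[OF less, of f f'] assms less by (auto simp: min_def max_def)
  have "\<bar>f' z\<bar> \<le> L" using assms(2)[of z] z less by (auto simp: min_def max_def)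
  then show ?thesis using z less by (simp add: abs_mult mult.commute mult_right_mono)
next
  case equal then show ?thesis by simp
next
  case greater
  obtain z where z: "y < z" "z < x" "f x - f y = (x - y) * f' z"
    using MVT2[OF greater, of f f'] assms greater by (auto simp: min_def max_def)
  have "\<bar>f' z\<bar> \<le> L" using assms(2)[of z] z greater by (auto simp: min_def max_def)
  then have "\<bar>f x - f y\<bar> \<le> L * \<bar>x - y\<bar>" using z greater by (simp add: abs_mult mult.commute mult_right_mono)
  then show ?thesis by (simp add: abs_minus_commute)
qed

context sf begin

lemma dom_bound:
  fixes x0 X0 X' u :: real
  assumes x0: "0 \<le> x0" "x0 < X0" and X': "\<bar>X' - X0\<bar> \<le> min (X0/2) ((X0-x0)/2)" "X' \<noteq> X0"
    and u: "x0 / (2 * X0) < u" "u < 1"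
  shows "\<bar>(Fu x0 X' u - Fu x0 X0 u) / (X' - X0)\<bar>
     \<le> 8 * MM (2 * X0) / X0^2 * h1 u + 8 * MM (2 * X0) * x0^2 / (X0^3 * (X0 - x0)) * h2 u"
proof -
  have X0: "X0 > 0" using x0 by linarith
  have u0: "u > 0" using u x0 X0 by (smt (verit) divide_nonneg_pos)
  define M where "M = MM (2 * X0)"
  have M0: "M \<ge> 0" using MM_nonneg X0 by (simp add: M_def)
  define s where "s = sqrt (1 - u^2)"
  have s: "s > 0" "s \<le> 1" using sqrt_one_minus_sq_pos[of u] u u0 by (auto simp: s_def)
  define I where "I = {min X' X0..max X' X0}"
  have xi: "X0 / 2 \<le> \<xi> \<and> \<xi> \<le> 3 * X0 / 2 \<and> (X0 - x0) / 2 \<le> \<xi> - x0" if "\<xi> \<in> I" for \<xi>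
    using that X' by (auto simp: I_def min_def max_def abs_le_iff split: if_splits)
  have Pd: "\<bar>phi (\<xi> * u) + \<xi> * u * dphi (\<xi> * u)\<bar> \<le> 8 * M / (X0^2 * u^2)" if "\<xi> \<in> I" for \<xi>
  proof -
    have x: "X0 / 2 \<le> \<xi>" "\<xi> \<le> 3 * X0 / 2" using xi[OF that] by auto
    have xp: "\<xi> > 0" using x X0 by linarith
    have xu: "\<xi> * u > 0" using xp u0 by (rule mult_pos_pos)
    have "\<xi> * u \<le> \<xi> * 1" using xp u by (intro mult_left_mono) auto
    then have xuY: "\<xi> * u \<le> 2 * X0" using x X0 by linarith
    have sq: "(\<xi> * u)^2 > 0" using xu by (rule zero_less_power)
    have b1: "\<bar>phi (\<xi> * u)\<bar> \<le> M / (\<xi> * u)^2"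
      using phi_bound[OF xu xuY] sq by (simp add: pos_le_divide_eq M_def)
    have "\<bar>dphi (\<xi> * u)\<bar> * (\<xi> * u)^3 \<le> M" using dphi_bound[OF xu xuY] by (simp add: M_def)
    then have b2': "\<bar>dphi (\<xi> * u)\<bar> * (\<xi> * u)^3 / (\<xi> * u)^2 \<le> M / (\<xi> * u)^2"
      using sq by (rule divide_right_mono[OF _ less_imp_le])
    have e: "\<bar>\<xi> * u * dphi (\<xi> * u)\<bar> = \<bar>dphi (\<xi> * u)\<bar> * (\<xi> * u)^3 / (\<xi> * u)^2"
    proof -
      define v where "v = \<xi> * u"
      have "v > 0" using xu by (simp add: v_def)
      then have "\<bar>v * dphi v\<bar> = \<bar>dphi v\<bar> * v^3 / v^2"
        by (simp add: abs_mult power2_eq_square power3_eq_cube)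
      then show ?thesis by (simp add: v_def)
    qed
    have b2: "\<bar>\<xi> * u * dphi (\<xi> * u)\<bar> \<le> M / (\<xi> * u)^2" unfolding e by (rule b2')
    have mono: "M / (\<xi> * u)^2 \<le> M / (X0 / 2 * u)^2"
      by (rule divide_left_mono) (use M0 x X0 u0 in \<open>auto intro!: power_mono mult_right_mono\<close>)
    have "\<bar>phi (\<xi> * u) + \<xi> * u * dphi (\<xi> * u)\<bar> \<le> 2 * (M / (X0 / 2 * u)^2)"
      using b1 b2 mono by linarith
    also have "\<dots> = 8 * M / (X0^2 * u^2)" by (simp add: power2_eq_square field_simps)
    finally show ?thesis .
  qed
  have Bd: "\<bar>dbeta x0 \<xi> u\<bar> \<le> 8 * x0^2 / (X0^2 * (X0 - x0)) / s" if "\<xi> \<in> I" for \<xi>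
  proof -
    have x: "X0 / 2 \<le> \<xi>" "(X0 - x0) / 2 \<le> \<xi> - x0" using xi[OF that] by auto
    have r: "(X0 - x0) / 2 \<le> sqrt (\<xi>^2 - x0^2)"
    proof -
      have "((X0 - x0) / 2)^2 \<le> \<xi>^2 - x0^2"
      proof -
        have "((X0 - x0) / 2)^2 \<le> (\<xi> - x0)^2" using x x0 by (intro power_mono) auto
        also have "\<dots> \<le> \<xi>^2 - x0^2"
        proof -
          have "x0 * x0 \<le> \<xi> * x0" by (rule mult_right_mono) (use x x0 in auto)
          then show ?thesis by (simp add: power2_eq_square algebra_simps)
        qed
        finally show ?thesis .
      qed
      then have "sqrt (((X0 - x0) / 2)^2) \<le> sqrt (\<xi>^2 - x0^2)" by (rule real_sqrt_le_mono)
      then show ?thesis using x0 by simp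
    qed
    have den: "X0^2 / 4 * ((X0 - x0) / 2) * s \<le> \<xi>^2 * sqrt (\<xi>^2 - x0^2) * s"
    proof -
      have "X0^2 / 4 \<le> \<xi>^2" using x X0 power_mono[of "X0/2" \<xi> 2] by (simp add: power_divide)
      then show ?thesis using r s x0 by (intro mult_right_mono mult_mono) auto
    qed
    have dpos: "X0^2 / 4 * ((X0 - x0) / 2) * s > 0" using X0 x0 s by simp
    have "\<bar>dbeta x0 \<xi> u\<bar> = x0^2 / (\<xi>^2 * sqrt (\<xi>^2 - x0^2) * s)"
      unfolding dbeta_def s_def[symmetric] using den dpos by simp
    also have "\<dots> \<le> x0^2 / (X0^2 / 4 * ((X0 - x0) / 2) * s)"
      by (rule divide_left_mono[OF den]) (use dpos den in auto)
    also have "\<dots> = 8 * x0^2 / (X0^2 * (X0 - x0)) / s" using X0 x0 s by (simp add: field_simps)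
    finally show ?thesis .
  qed
  define P where "P X = X * phi (X * u)" for X
  define m where "m X = max (beta x0 X u) 0" for X
  have Fu_eq: "Fu x0 X u = P X * m X" for X unfolding Fu_def P_def m_def by simp
  have lipP: "\<bar>P X' - P X0\<bar> \<le> 8 * M / (X0^2 * u^2) * \<bar>X' - X0\<bar>"
  proof (rule lip_mvt[where f' = "\<lambda>\<xi>. phi (\<xi> * u) + \<xi> * u * dphi (\<xi> * u)"])
    fix \<xi> assume "\<xi> \<in> {min X0 X'..max X0 X'}"
    then have "\<xi> \<in> I" by (auto simp: I_def)
    then show "(P has_real_derivative phi (\<xi> * u) + \<xi> * u * dphi (\<xi> * u)) (at \<xi>)"
      "\<bar>phi (\<xi> * u) + \<xi> * u * dphi (\<xi> * u)\<bar> \<le> 8 * M / (X0^2 * u^2)"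
      using P_deriv[of \<xi> u] xi X0 u0 Pd unfolding P_def[abs_def] by force+
  qed
  have lipB: "\<bar>beta x0 X' u - beta x0 X0 u\<bar> \<le> 8 * x0^2 / (X0^2 * (X0 - x0)) / s * \<bar>X' - X0\<bar>"
  proof (rule lip_mvt[where f = "\<lambda>X. beta x0 X u" and f' = "\<lambda>\<xi>. dbeta x0 \<xi> u"])
    fix \<xi> assume "\<xi> \<in> {min X0 X'..max X0 X'}"
    then have xI: "\<xi> \<in> I" by (auto simp: I_def)
    have "(X0 - x0) / 2 \<le> \<xi> - x0" using xi[OF xI] by blast
    then have "X0 - x0 \<le> 2 * (\<xi> - x0)" by simp
    then have "x0 < \<xi>" using x0 by (smt (verit))
    then show "((\<lambda>X. beta x0 X u) has_real_derivative dbeta x0 \<xi> u) (at \<xi>)"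
      using beta_deriv[of x0 \<xi> u] x0 u u0 by simp
    show "\<bar>dbeta x0 \<xi> u\<bar> \<le> 8 * x0^2 / (X0^2 * (X0 - x0)) / s" using Bd[OF xI] .
  qed
  have X'I: "X' \<in> I" by (simp add: I_def)
  have X'pos: "X' > 0" "x0 \<le> X'" using xi[OF X'I] X0 x0 by auto
  have mX': "0 \<le> m X'" "m X' \<le> 1 / s - 1"
    using beta_le[of x0 X' u] X'pos u u0 s x0 by (auto simp: m_def s_def)
  have lipm: "\<bar>m X' - m X0\<bar> \<le> 8 * x0^2 / (X0^2 * (X0 - x0)) / s * \<bar>X' - X0\<bar>"
    using max0_lip[of "beta x0 X' u" "beta x0 X0 u"] lipB unfolding m_def by linarith
  have PX0: "\<bar>P X0\<bar> \<le> M / (X0 * u^2)"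
  proof -
    have xu: "X0 * u > 0" "X0 * u \<le> 2 * X0" using X0 u0 u by auto
    have sq: "(X0 * u)^2 > 0" using xu(1) by (rule zero_less_power)
    have "\<bar>phi (X0 * u)\<bar> \<le> M / (X0 * u)^2"
      using phi_bound[OF xu] sq by (simp add: pos_le_divide_eq M_def)
    then have "X0 * \<bar>phi (X0 * u)\<bar> \<le> X0 * (M / (X0 * u)^2)" using X0 by (intro mult_left_mono) auto
    then have "\<bar>P X0\<bar> \<le> X0 * (M / (X0 * u)^2)" unfolding P_def using X0 by (simp add: abs_mult)
    also have "\<dots> = M / (X0 * u^2)" using X0 u0 by (simp add: field_simps power2_eq_square)
    finally show ?thesis .
  qed
  have h: "\<bar>X' - X0\<bar> > 0" using X' by simp
  have "P X' * m X' - P X0 * m X0 = (P X' - P X0) * m X' + P X0 * (m X' - m X0)"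
    by algebra
  then have e: "Fu x0 X' u - Fu x0 X0 u = (P X' - P X0) * m X' + P X0 * (m X' - m X0)"
    by (simp only: Fu_eq)
  have "\<bar>(P X' - P X0) * m X' + P X0 * (m X' - m X0)\<bar> \<le> \<bar>(P X' - P X0) * m X'\<bar> + \<bar>P X0 * (m X' - m X0)\<bar>"
    by (rule abs_triangle_ineq)
  also have "\<dots> = \<bar>P X' - P X0\<bar> * m X' + \<bar>P X0\<bar> * \<bar>m X' - m X0\<bar>"
    using mX'(1) by (simp add: abs_mult)
  finally have "\<bar>Fu x0 X' u - Fu x0 X0 u\<bar> \<le> \<bar>P X' - P X0\<bar> * m X' + \<bar>P X0\<bar> * \<bar>m X' - m X0\<bar>"
    unfolding e .
  also have "\<dots> \<le> (8 * M / (X0^2 * u^2) * \<bar>X' - X0\<bar>) * (1 / s - 1)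
      + (M / (X0 * u^2)) * (8 * x0^2 / (X0^2 * (X0 - x0)) / s * \<bar>X' - X0\<bar>)"
    by (intro add_mono mult_mono lipP mX' PX0 lipm) (use M0 X0 u0 x0 s in auto)
  finally have "\<bar>(Fu x0 X' u - Fu x0 X0 u) / (X' - X0)\<bar> \<le>
      ((8 * M / (X0^2 * u^2) * \<bar>X' - X0\<bar>) * (1 / s - 1)
      + (M / (X0 * u^2)) * (8 * x0^2 / (X0^2 * (X0 - x0)) / s * \<bar>X' - X0\<bar>)) / \<bar>X' - X0\<bar>"
    using h by (simp add: abs_divide divide_right_mono)
  also have "\<dots> = 8 * M / X0^2 * ((1 / s - 1) / u^2) + 8 * M * x0^2 / (X0^3 * (X0 - x0)) * (1 / (u^2 * s))"
    using h X0 u0 s x0 by (simp add: field_simps power2_eq_square power3_eq_cube)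
  also have "(1 / s - 1) / u^2 = h1 u" unfolding s_def using h1_eq u u0 by simp
  also have "1 / (u^2 * s) = h2 u" unfolding s_def h2_def ..
  finally show ?thesis unfolding M_def .
qed

end



lemma integral_minus_point: "integral (A - {p}) f = integral A (f :: real \<Rightarrow> real)"
  by (rule integral_spike_set) (auto intro: negligible_subset[OF negligible_sing[of p]])

lemma integrable_minus_point: "f integrable_on (A - {p}) \<longleftrightarrow> (f :: real \<Rightarrow> real) integrable_on A"
  by (rule integrable_spike_set_eq) (auto intro: negligible_subset[OF negligible_sing[of p]])

context sf begin

lemma Fu_deriv_pt: assumes "0 \<le> x0" "x0 < X0" "0 < u" "u < 1" "u \<noteq> x0 / X0"
  shows "((\<lambda>X. Fu x0 X u) has_real_derivative Du x0 X0 u) (at X0)"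
proof -
  have X0: "X0 > 0" using assms by linarith
  show ?thesis
  proof (cases "x0 / X0 < u")
    case True
    then have xu: "x0 < X0 * u" using X0 by (simp add: divide_less_eq mult.commute)
    have x0u: "x0 \<le> x0 / u" using assms by (simp add: le_divide_eq mult_left_le)
    have D: "((\<lambda>X. X * phi (X * u) * beta x0 X u) has_real_derivative
        (phi (X0 * u) + X0 * u * dphi (X0 * u)) * beta x0 X0 u + dbeta x0 X0 u * (X0 * phi (X0 * u))) (at X0)"
      by (rule DERIV_mult[OF P_deriv beta_deriv]) (use assms X0 in auto)
    have eqD: "(phi (X0 * u) + X0 * u * dphi (X0 * u)) * beta x0 X0 u + dbeta x0 X0 u * (X0 * phi (X0 * u))
        = Du x0 X0 u" unfolding Du_def using True by (simp add: algebra_simps)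
    show ?thesis
    proof (rule has_field_derivative_transform_within_open[OF D[unfolded eqD], of "{x0/u<..}"])
      show "X0 \<in> {x0 / u<..}" using xu assms by (simp add: divide_less_eq)
      fix X assume X: "X \<in> {x0 / u<..}"
      then have X1: "x0 < X * u" using assms by (simp add: divide_less_eq)
      have X2: "x0 \<le> X" "0 < X" using X x0u assms by (auto intro: le_less_trans)
      have "beta x0 X u > 0" using beta_pos_iff[of x0 X u] X1 X2 assms by simp
      then show "X * phi (X * u) * beta x0 X u = Fu x0 X u" unfolding Fu_def by simp
    qed simp
  next
    case False
    then have lt: "u < x0 / X0" using assms by simp
    then have x0p: "x0 > 0" using assms X0 by (smt (verit) divide_nonpos_pos)
    have xu: "X0 * u < x0" using lt X0 by (simp add: less_divide_eq mult.commute)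
    have Du0: "Du x0 X0 u = 0" unfolding Du_def using False by simp
    show ?thesis unfolding Du0
    proof (rule has_field_derivative_transform_within_open[OF DERIV_const, of "{x0<..<x0/u}"])
      show "X0 \<in> {x0<..<x0 / u}" using xu assms by (simp add: less_divide_eq)
      fix X assume X: "X \<in> {x0<..<x0 / u}"
      then have X1: "\<not> x0 < X * u" using assms by (simp add: less_divide_eq)
      have X2: "x0 \<le> X" "0 < X" using X assms by auto
      have "\<not> beta x0 X u > 0" using beta_pos_iff[of x0 X u] X1 X2 assms by simp
      then show "0 = Fu x0 X u" unfolding Fu_def by simp
    qed simp
  qed
qed

lemma Q_deriv:
  assumes x0: "0 \<le> x0" "x0 < X0"
  shows "Du x0 X0 integrable_on {x0 / (2 * X0)<..<1}"
    and "((\<lambda>X. integral {x0 / (2 * X0)<..<1} (Fu x0 X)) has_real_derivative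
           integral {x0 / (2 * X0)<..<1} (Du x0 X0)) (at X0)"
proof -
  have X0: "X0 > 0" using x0 by linarith
  define lm where "lm = x0 / (2 * X0)"
  have lm0: "lm \<ge> 0" using x0 X0 by (simp add: lm_def)
  define \<delta> where "\<delta> = min (X0/2) ((X0-x0)/2)"
  have \<delta>: "\<delta> > 0" using x0 X0 by (simp add: \<delta>_def)
  define S' where "S' = {lm<..<1} - {x0 / X0}"
  define A1 where "A1 = 8 * MM (2 * X0) / X0^2"
  define A2 where "A2 = 8 * MM (2 * X0) * x0^2 / (X0^3 * (X0 - x0))"
  define hd where "hd u = A1 * h1 u + A2 * h2 u" for u
  define Q where "Q X = integral {lm<..<1} (Fu x0 X)" for X
  have hd_int: "hd integrable_on {lm<..<1}"
  proof -
    have i1: "(\<lambda>u. A1 * h1 u) integrable_on {lm<..<1}"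
      by (rule integrable_on_mult_right[OF h1_integrable_Ioo[OF lm0]])
    have i2: "(\<lambda>u. A2 * h2 u) integrable_on {lm<..<1}"
    proof (cases "x0 = 0")
      case True
      then have "(\<lambda>u. A2 * h2 u) = (\<lambda>u. 0)" by (simp add: A2_def)
      then show ?thesis by (simp add: integrable_0)
    next
      case False
      then have "lm > 0" using x0 X0 by (simp add: lm_def)
      then show ?thesis by (rule integrable_on_mult_right[OF h2_integrable_Ioo])
    qed
    show ?thesis unfolding hd_def by (rule integrable_add[OF i1 i2])
  qed
  then have hd_int': "hd integrable_on S'" unfolding S'_def by (simp add: integrable_minus_point)
  have seq: "Du x0 X0 integrable_on S' \<and>
      (\<lambda>n. (Q (Z n) - Q X0) / (Z n - X0)) \<longlonglongrightarrow> integral S' (Du x0 X0)"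
    if Z: "\<And>n. \<bar>Z n - X0\<bar> \<le> \<delta>" "\<And>n. Z n \<noteq> X0" "Z \<longlonglongrightarrow> X0" for Z
  proof -
    define f where "f k u = (Fu x0 (Z k) u - Fu x0 X0 u) / (Z k - X0)" for k u
    have Zk: "x0 \<le> Z k" "0 < Z k" for k
    proof -
      have "\<bar>Z k - X0\<bar> \<le> (X0 - x0) / 2" "\<bar>Z k - X0\<bar> \<le> X0 / 2" using Z(1)[of k] by (auto simp: \<delta>_def)
      then show "x0 \<le> Z k" "0 < Z k" using x0 X0 by argo+
    qed
    have fint: "f k integrable_on S'" for k
    proof -
      have a: "Fu x0 (Z k) integrable_on {lm<..<1}"
        using Fu_absint[OF x0(1) Zk(1) Zk(2) lm0] set_lebesgue_integral_eq_integral(1) by blast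
      have b: "Fu x0 X0 integrable_on {lm<..<1}"
        using Fu_absint[OF x0(1) less_imp_le[OF x0(2)] X0 lm0] set_lebesgue_integral_eq_integral(1) by blast
      have "f k integrable_on {lm<..<1}" unfolding f_def divide_inverse
        by (intro integrable_on_mult_left integrable_diff a b)
      then show ?thesis unfolding S'_def by (simp add: integrable_minus_point)
    qed
    have fbound: "norm (f k u) \<le> hd u" if "u \<in> S'" for k u
    proof -
      have u: "lm < u" "u < 1" using that by (auto simp: S'_def)
      show ?thesis unfolding f_def hd_def A1_def A2_def real_norm_def
        by (rule dom_bound[OF x0]) (use Z u in \<open>auto simp: \<delta>_def lm_def\<close>)
    qed
    have fconv: "(\<lambda>k. f k u) \<longlonglongrightarrow> Du x0 X0 u" if "u \<in> S'" for u
    proof -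
      have u: "lm < u" "u < 1" "u \<noteq> x0 / X0" using that by (auto simp: S'_def)
      have "0 < u" using u lm0 by linarith
      then have "((\<lambda>X. Fu x0 X u) has_real_derivative Du x0 X0 u) (at X0)"
        using Fu_deriv_pt[OF x0 _ u(2,3)] by blast
      then have "((\<lambda>X. (Fu x0 X u - Fu x0 X0 u) / (X - X0)) \<longlongrightarrow> Du x0 X0 u) (at X0)"
        by (simp add: has_field_derivative_iff)
      then have "((\<lambda>X. (Fu x0 X u - Fu x0 X0 u) / (X - X0)) \<circ> Z) \<longlonglongrightarrow> Du x0 X0 u"
        using Z(2,3) unfolding tendsto_at_iff_sequentially by auto
      then show ?thesis by (simp add: f_def o_def)
    qed
    note dc = dominated_convergence[OF fint hd_int' fbound fconv]
    have qe: "integral S' (f k) = (Q (Z k) - Q X0) / (Z k - X0)" for k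
    proof -
      have a: "Fu x0 (Z k) integrable_on {lm<..<1}"
        using Fu_absint[OF x0(1) Zk(1) Zk(2) lm0] set_lebesgue_integral_eq_integral(1) by blast
      have b: "Fu x0 X0 integrable_on {lm<..<1}"
        using Fu_absint[OF x0(1) less_imp_le[OF x0(2)] X0 lm0] set_lebesgue_integral_eq_integral(1) by blast
      have "integral S' (f k) = integral {lm<..<1} (f k)" unfolding S'_def by (rule integral_minus_point)
      also have "\<dots> = integral {lm<..<1} (\<lambda>u. Fu x0 (Z k) u - Fu x0 X0 u) / (Z k - X0)"
        unfolding f_def by simp
      also have "\<dots> = (Q (Z k) - Q X0) / (Z k - X0)" unfolding Q_def by (simp add: integral_diff[OF a b])
      finally show ?thesis .
    qed
    show ?thesis using dc qe by simp
  qed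
  have Dint: "Du x0 X0 integrable_on S'"
  proof -
    define Z0 where "Z0 n = X0 + \<delta> * inverse (real (Suc n))" for n
    have "\<bar>Z0 n - X0\<bar> \<le> \<delta>" for n
    proof -
      have "inverse (real (Suc n)) \<le> 1" by (simp add: inverse_le_1_iff)
      then have "\<delta> * inverse (real (Suc n)) \<le> \<delta> * 1" using \<delta> by (intro mult_left_mono) auto
      then show ?thesis using \<delta> by (simp add: Z0_def)
    qed
    moreover have "Z0 n \<noteq> X0" for n using \<delta> by (simp add: Z0_def)
    moreover have "Z0 \<longlonglongrightarrow> X0"
    proof -
      have "(\<lambda>n. \<delta> * inverse (real (Suc n))) \<longlonglongrightarrow> \<delta> * 0"
        by (intro tendsto_mult tendsto_const LIMSEQ_inverse_real_of_nat)
      then have "(\<lambda>n. X0 + \<delta> * inverse (real (Suc n))) \<longlonglongrightarrow> X0 + \<delta> * 0"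
        by (intro tendsto_add tendsto_const)
      then show ?thesis unfolding Z0_def by simp
    qed
    ultimately show ?thesis using seq by blast
  qed
  show "Du x0 X0 integrable_on {x0 / (2 * X0)<..<1}"
    using Dint unfolding S'_def lm_def by (simp add: integrable_minus_point)
  have "((\<lambda>y. (Q y - Q X0) / (y - X0)) \<longlongrightarrow> integral S' (Du x0 X0)) (at X0)"
    unfolding tendsto_at_iff_sequentially
  proof (intro allI impI)
    fix Y :: "nat \<Rightarrow> real" assume Y: "\<forall>i. Y i \<in> UNIV - {X0}" "Y \<longlonglongrightarrow> X0"
    define Z where "Z n = (if \<bar>Y n - X0\<bar> \<le> \<delta> then Y n else X0 + \<delta>)" for n
    have ev: "\<forall>\<^sub>F n in sequentially. Z n = Y n"
    proof -
      have "\<forall>\<^sub>F n in sequentially. dist (Y n) X0 < \<delta>" using tendstoD[OF Y(2) \<delta>] .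
      then show ?thesis by eventually_elim (auto simp: Z_def dist_real_def)
    qed
    have Zc: "Z \<longlonglongrightarrow> X0" by (rule Lim_transform_eventually[OF Y(2)]) (use ev in \<open>auto elim: eventually_mono\<close>)
    have "(\<lambda>n. (Q (Z n) - Q X0) / (Z n - X0)) \<longlonglongrightarrow> integral S' (Du x0 X0)"
      using seq[of Z] Zc Y(1) \<delta> by (auto simp: Z_def)
    then have "(\<lambda>n. (Q (Y n) - Q X0) / (Y n - X0)) \<longlonglongrightarrow> integral S' (Du x0 X0)"
      by (rule Lim_transform_eventually) (use ev in \<open>auto elim: eventually_mono\<close>)
    then show "((\<lambda>y. (Q y - Q X0) / (y - X0)) \<circ> Y) \<longlonglongrightarrow> integral S' (Du x0 X0)"
      by (simp add: o_def)
  qed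
  then have "(Q has_real_derivative integral S' (Du x0 X0)) (at X0)"
    by (simp add: has_field_derivative_iff)
  then show "((\<lambda>X. integral {x0 / (2 * X0)<..<1} (Fu x0 X)) has_real_derivative
           integral {x0 / (2 * X0)<..<1} (Du x0 X0)) (at X0)"
    unfolding Q_def S'_def lm_def integral_minus_point .
qed

end



context sf begin

lemma transport_eq:
  assumes "0 \<le> c" "c < s" and G: "G absolutely_integrable_on {a c / a s<..<1}"
    and eq: "\<And>t. t \<in> {c<..<s} \<Longrightarrow> (a1 t / a s) * G (a t / a s) = T t"
  shows "T absolutely_integrable_on {c<..<s}" "integral {c<..<s} T = integral {a c / a s<..<1} G"
proof -
  note tr = transport[OF assms(1,2) G]
  show "T absolutely_integrable_on {c<..<s}"
    by (rule iffD1[OF set_integrable_cong[OF refl refl eq] tr(1)])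
  show "integral {c<..<s} T = integral {a c / a s<..<1} G"
    by (rule trans[OF sym[OF integral_cong[OF eq]] tr(2)])
qed

lemma Fu_zero: assumes "0 \<le> x0" "x0 \<le> X" "0 < X" "0 \<le> u" "u < 1" "X * u \<le> x0"
  shows "Fu x0 X u = 0"
proof -
  have "\<not> beta x0 X u > 0" using beta_pos_iff[OF assms(1-5)] assms(6) by simp
  then show ?thesis unfolding Fu_def by simp
qed

lemma phiX_cont: assumes "0 \<le> l" "0 < X" shows "continuous_on {l<..<1} (\<lambda>u. phi (X * u))"
proof (rule continuous_at_imp_continuous_on, rule ballI)
  fix u assume "u \<in> {l<..<1}"
  then have "X * u > 0" using assms by simp
  then show "isCont (\<lambda>u. phi (X * u)) u"
    by (intro isCont_o2[OF _ phi_isCont]) (auto intro!: continuous_intros)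
qed

lemma beta_cont: assumes "0 \<le> l" "0 < X" shows "continuous_on {l<..<1} (\<lambda>u. beta x0 X u)"
  unfolding beta_def
proof (intro continuous_intros ballI)
  fix u assume "u \<in> {l<..<1}"
  then have "sqrt (1 - u^2) > 0" using sqrt_one_minus_sq_pos assms by simp
  then show "X * sqrt (1 - u^2) \<noteq> 0" using assms by simp
qed

lemma dbeta_cont: assumes "0 \<le> l" "0 \<le> x0" "x0 < X" shows "continuous_on {l<..<1} (\<lambda>u. dbeta x0 X u)"
  unfolding dbeta_def
proof (intro continuous_intros ballI)
  fix u assume "u \<in> {l<..<1}"
  then have "sqrt (1 - u^2) > 0" using sqrt_one_minus_sq_pos assms by simp
  moreover have "sqrt (X^2 - x0^2) > 0" using assms by (simp add: power_strict_mono)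
  moreover have "X \<noteq> 0" using assms by simp
  ultimately show "X^2 * sqrt (X^2 - x0^2) * sqrt (1 - u^2) \<noteq> 0" by simp
qed

definition bt where "bt \<tau> c t = sqrt ((a \<tau>)^2 - (a c)^2) / sqrt ((a \<tau>)^2 - (a t)^2) - 1"
definition T1 where "T1 \<tau> c t = a2 t / (a1 t)^2 * bt \<tau> c t / a \<tau>"
definition T2 where "T2 \<tau> c t = a t * dq t * bt \<tau> c t / a \<tau>"
definition T3 where "T3 \<tau> c t = a2 t / (a1 t)^2 *
   ((a c)^2 / (sqrt ((a \<tau>)^2 - (a c)^2) * sqrt ((a \<tau>)^2 - (a t)^2))) / a \<tau>"

lemma L_split:
  assumes c: "0 \<le> c" "c < \<tau>"
  shows "T1 \<tau> c absolutely_integrable_on {c<..<\<tau>}" "T2 \<tau> c absolutely_integrable_on {c<..<\<tau>}"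
    "T3 \<tau> c absolutely_integrable_on {c<..<\<tau>}"
    "integral {a c / (2 * a \<tau>)<..<1} (Du (a c) (a \<tau>)) =
       integral {c<..<\<tau>} (T1 \<tau> c) + integral {c<..<\<tau>} (T2 \<tau> c) + integral {c<..<\<tau>} (T3 \<tau> c)"
proof -
  define X0 where "X0 = a \<tau>"
  define x0 where "x0 = a c"
  have X0: "X0 > 0" using apos c by (simp add: X0_def)
  have x0: "0 \<le> x0" "x0 < X0" using anonneg aless c by (auto simp: X0_def x0_def)
  define lm where "lm = x0 / (2 * X0)"
  define l0 where "l0 = x0 / X0"
  have l: "0 \<le> lm" "lm \<le> l0" "0 \<le> l0" using x0 X0 by (auto simp: lm_def l0_def divide_left_mono)
  define M where "M = MM X0"
  have M0: "M \<ge> 0" using MM_nonneg X0 by (simp add: M_def)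
  define D1 where "D1 u = phi (X0 * u) * beta x0 X0 u" for u
  define D2 where "D2 u = X0 * u * dphi (X0 * u) * beta x0 X0 u" for u
  define D3 where "D3 u = X0 * phi (X0 * u) * dbeta x0 X0 u" for u
  have DuD: "Du x0 X0 u = D1 u + D2 u + D3 u" if "u \<in> {l0<..<1}" for u
    using that unfolding Du_def D1_def D2_def D3_def l0_def by (simp add: algebra_simps)
  have pt: "0 < u \<and> 0 < X0 * u \<and> X0 * u \<le> X0 \<and> 0 \<le> beta x0 X0 u \<and>
      beta x0 X0 u \<le> 1 / sqrt (1 - u^2) - 1 \<and> sqrt (1 - u^2) > 0" if u: "u \<in> {l0<..<1}" for u
  proof -
    have u0: "u > 0" using u l by auto
    have "x0 < X0 * u" using u X0 by (simp add: l0_def divide_less_eq mult.commute)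
    then have "beta x0 X0 u > 0" using beta_pos_iff[of x0 X0 u] x0 X0 u u0 by simp
    moreover have "beta x0 X0 u \<le> 1 / sqrt (1 - u^2) - 1" using beta_le[of x0 X0 u] x0 X0 u u0 by simp
    moreover have "X0 * u \<le> X0" using u X0 by simp
    moreover have "sqrt (1 - u^2) > 0" using sqrt_one_minus_sq_pos u u0 by simp
    ultimately show ?thesis using u0 X0 by simp
  qed
  have phib: "\<bar>phi (X0 * u)\<bar> \<le> M / (X0 * u)^2" if "u \<in> {l0<..<1}" for u
  proof -
    have p: "0 < X0 * u" "X0 * u \<le> X0" using pt[OF that] by auto
    have "(X0 * u)^2 > 0" using p(1) by (rule zero_less_power)
    then show ?thesis using phi_bound[OF p] by (simp add: pos_le_divide_eq M_def)
  qed
  have dphib: "\<bar>X0 * u * dphi (X0 * u)\<bar> \<le> M / (X0 * u)^2" if "u \<in> {l0<..<1}" for u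
  proof -
    have p: "0 < X0 * u" "X0 * u \<le> X0" using pt[OF that] by auto
    define v where "v = X0 * u"
    have v: "v > 0" "\<bar>dphi v\<bar> * v^3 \<le> M" using p dphi_bound[OF p] by (auto simp: v_def M_def)
    have sq: "v^2 > 0" using v(1) by (rule zero_less_power)
    have "\<bar>v * dphi v\<bar> = \<bar>dphi v\<bar> * v^3 / v^2" using v(1)
      by (simp add: abs_mult power2_eq_square power3_eq_cube)
    also have "\<dots> \<le> M / v^2" using v(2) sq by (intro divide_right_mono) auto
    finally show ?thesis by (simp add: v_def)
  qed
  have h1b: "M / (X0 * u)^2 * (1 / sqrt (1 - u^2) - 1) = M / X0^2 * h1 u" if "u \<in> {l0<..<1}" for u
  proof -
    have u: "0 < u" "u < 1" using pt[OF that] that by auto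
    have "M / (X0 * u)^2 * (1 / sqrt (1 - u^2) - 1) = M / X0^2 * ((1 / sqrt (1 - u^2) - 1) / u^2)"
      by (simp add: power_mult_distrib)
    then show ?thesis using h1_eq[OF u] by simp
  qed
  have h1i: "(\<lambda>u. M / X0^2 * h1 u) integrable_on {l0<..<1}"
    by (rule integrable_on_mult_right[OF h1_integrable_Ioo[OF l(3)]])
  have D1i: "D1 absolutely_integrable_on {l0<..<1}"
  proof (rule cont_dom_absint[OF _ h1i])
    show "continuous_on {l0<..<1} D1" unfolding D1_def
      by (intro continuous_intros phiX_cont beta_cont l X0)
    fix u assume u: "u \<in> {l0<..<1}"
    have "\<bar>D1 u\<bar> = \<bar>phi (X0 * u)\<bar> * beta x0 X0 u" using pt[OF u] by (simp add: D1_def abs_mult)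
    also have "\<dots> \<le> M / (X0 * u)^2 * (1 / sqrt (1 - u^2) - 1)"
      using pt[OF u] phib[OF u] M0 by (intro mult_mono) auto
    finally show "\<bar>D1 u\<bar> \<le> M / X0^2 * h1 u" using h1b[OF u] by simp
  qed
  define A3 where "A3 = M * x0^2 / (X0^3 * sqrt (X0^2 - x0^2))"
  have sD: "sqrt (X0^2 - x0^2) > 0" using x0 by (simp add: power_strict_mono)
  have h2i: "(\<lambda>u. A3 * h2 u) integrable_on {l0<..<1}"
  proof (cases "x0 = 0")
    case True
    then have "(\<lambda>u. A3 * h2 u) = (\<lambda>u. 0)" by (simp add: A3_def)
    then show ?thesis by (simp add: integrable_0)
  next
    case False
    then have "l0 > 0" using x0 X0 by (simp add: l0_def)
    then show ?thesis by (rule integrable_on_mult_right[OF h2_integrable_Ioo])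
  qed
  have D3i: "D3 absolutely_integrable_on {l0<..<1}"
  proof (rule cont_dom_absint[OF _ h2i])
    show "continuous_on {l0<..<1} D3" unfolding D3_def
      by (intro continuous_intros phiX_cont dbeta_cont l X0 x0)
    fix u assume u: "u \<in> {l0<..<1}"
    have s: "sqrt (1 - u^2) > 0" "0 < u" using pt[OF u] by auto
    have db: "dbeta x0 X0 u = x0^2 / (X0^2 * sqrt (X0^2 - x0^2) * sqrt (1 - u^2))"
      "dbeta x0 X0 u \<ge> 0" using s sD by (auto simp: dbeta_def)
    have "\<bar>D3 u\<bar> = X0 * \<bar>phi (X0 * u)\<bar> * dbeta x0 X0 u"
      using db(2) X0 by (simp add: D3_def abs_mult)
    also have "\<dots> \<le> X0 * (M / (X0 * u)^2) * dbeta x0 X0 u"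
      using phib[OF u] X0 db(2) by (intro mult_right_mono mult_left_mono) auto
    also have "\<dots> = A3 * h2 u" unfolding db(1) A3_def h2_def using X0 s sD
      by (simp add: field_simps power2_eq_square power3_eq_cube)
    finally show "\<bar>D3 u\<bar> \<le> A3 * h2 u" .
  qed
  have Dui: "Du x0 X0 integrable_on {l0<..<1}"
  proof -
    have "Du x0 X0 integrable_on {lm..1}"
      using Q_deriv(1)[OF x0] unfolding lm_def integrable_on_Icc_iff_Ioo .
    then have "Du x0 X0 integrable_on {l0..1}" by (rule integrable_on_subinterval) (use l in auto)
    then show ?thesis by (simp only: integrable_on_Icc_iff_Ioo)
  qed
  have D2i: "D2 absolutely_integrable_on {l0<..<1}"
  proof (rule absolutely_integrable_integrable_bound[OF _ _ h1i])
    have i2: "D1 integrable_on {l0<..<1}" using D1i by (rule set_lebesgue_integral_eq_integral(1))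
    have i3: "D3 integrable_on {l0<..<1}" using D3i by (rule set_lebesgue_integral_eq_integral(1))
    have "(\<lambda>u. Du x0 X0 u - D1 u - D3 u) integrable_on {l0<..<1}"
      by (rule integrable_diff[OF integrable_diff[OF Dui i2] i3])
    moreover have "D2 integrable_on {l0<..<1} \<longleftrightarrow> (\<lambda>u. Du x0 X0 u - D1 u - D3 u) integrable_on {l0<..<1}"
      by (rule integrable_cong) (simp add: DuD)
    ultimately show "D2 integrable_on {l0<..<1}" by simp
    fix u assume u: "u \<in> {l0<..<1}"
    have "\<bar>D2 u\<bar> = \<bar>X0 * u * dphi (X0 * u)\<bar> * beta x0 X0 u" using pt[OF u] by (simp add: D2_def abs_mult)
    also have "\<dots> \<le> M / (X0 * u)^2 * (1 / sqrt (1 - u^2) - 1)"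
      using pt[OF u] dphib[OF u] M0 by (intro mult_mono) auto
    finally show "norm (D2 u) \<le> M / X0^2 * h1 u" using h1b[OF u] by simp
  qed
  have tfacts: "0 < t \<and> a1 t > 0 \<and> X0 * (a t / X0) = a t \<and> phi (a t) = q t \<and>
      beta x0 X0 (a t / X0) = bt \<tau> c t \<and> X0 * sqrt (1 - (a t / X0)^2) = sqrt (X0^2 - (a t)^2) \<and>
      sqrt (X0^2 - (a t)^2) > 0" if t: "t \<in> {c<..<\<tau>}" for t
  proof -
    have t0: "t > 0" using t c by simp
    have at: "x0 \<le> a t" "a t < X0" using aless aleq t c by (auto simp: x0_def X0_def)
    have "0 \<le> a t" using at x0 by simp
    have "(a t)^2 < X0^2" using at \<open>0 \<le> a t\<close> by (simp add: power_strict_mono)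
    then show ?thesis using t0 a1pos[OF t0] X0 beta_at(1)[OF x0(1) at] sqrt_scale[OF X0 \<open>0 \<le> a t\<close> less_imp_le[OF at(2)]]
      b_a[of t] by (auto simp: phi_def bt_def x0_def X0_def)
  qed
  note tr1 = transport_eq[OF c D1i[unfolded l0_def x0_def X0_def], of "T1 \<tau> c"]
  note tr2 = transport_eq[OF c D2i[unfolded l0_def x0_def X0_def], of "T2 \<tau> c"]
  note tr3 = transport_eq[OF c D3i[unfolded l0_def x0_def X0_def], of "T3 \<tau> c"]
  have e1: "(a1 t / a \<tau>) * D1 (a t / a \<tau>) = T1 \<tau> c t" if "t \<in> {c<..<\<tau>}" for t
    using tfacts[OF that] unfolding D1_def T1_def X0_def[symmetric]
    by (simp add: q_def power2_eq_square power3_eq_cube)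
  have e2: "(a1 t / a \<tau>) * D2 (a t / a \<tau>) = T2 \<tau> c t" if "t \<in> {c<..<\<tau>}" for t
    using tfacts[OF that] unfolding D2_def T2_def X0_def[symmetric]
    by (simp add: dphi_def b_a)
  have e3: "(a1 t / a \<tau>) * D3 (a t / a \<tau>) = T3 \<tau> c t" if "t \<in> {c<..<\<tau>}" for t
  proof -
    note f = tfacts[OF that]
    have "dbeta x0 X0 (a t / X0) = x0^2 / (X0 * sqrt (X0^2 - x0^2) * sqrt (X0^2 - (a t)^2))"
      unfolding dbeta_def using f X0 by (simp add: power2_eq_square mult.assoc)
    then show ?thesis using f unfolding D3_def T3_def X0_def[symmetric] x0_def[symmetric]
      by (simp add: q_def power2_eq_square power3_eq_cube)
  qed
  show "T1 \<tau> c absolutely_integrable_on {c<..<\<tau>}" using tr1(1) e1 by blast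
  show "T2 \<tau> c absolutely_integrable_on {c<..<\<tau>}" using tr2(1) e2 by blast
  show "T3 \<tau> c absolutely_integrable_on {c<..<\<tau>}" using tr3(1) e3 by blast
  have "integral {a c / (2 * a \<tau>)<..<1} (Du (a c) (a \<tau>)) = integral {l0<..<1} (Du x0 X0)"
  proof (unfold x0_def[symmetric] X0_def[symmetric] lm_def[symmetric], rule integral_spike_set)
    show "negligible {u \<in> {lm<..<1} - {l0<..<1}. Du x0 X0 u \<noteq> 0}"
    proof -
      have e: "{u \<in> {lm<..<1} - {l0<..<1}. Du x0 X0 u \<noteq> 0} = {}"
        by (auto simp: Du_def l0_def)
      show ?thesis unfolding e by (rule negligible_empty)
    qed
    show "negligible {u \<in> {l0<..<1} - {lm<..<1}. Du x0 X0 u \<noteq> 0}"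
    proof -
      have e: "{u \<in> {l0<..<1} - {lm<..<1}. Du x0 X0 u \<noteq> 0} = {}" using l by auto
      show ?thesis unfolding e by (rule negligible_empty)
    qed
  qed
  also have "\<dots> = integral {l0<..<1} (\<lambda>u. D1 u + D2 u + D3 u)"
    by (rule integral_cong) (rule DuD)
  also have "\<dots> = integral {l0<..<1} D1 + integral {l0<..<1} D2 + integral {l0<..<1} D3"
  proof -
    have i1: "D1 integrable_on {l0<..<1}" using D1i by (rule set_lebesgue_integral_eq_integral(1))
    have i2: "D2 integrable_on {l0<..<1}" using D2i by (rule set_lebesgue_integral_eq_integral(1))
    have i3: "D3 integrable_on {l0<..<1}" using D3i by (rule set_lebesgue_integral_eq_integral(1))
    show ?thesis by (simp add: integral_add[OF integrable_add[OF i1 i2] i3] integral_add[OF i1 i2])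
  qed
  also have "\<dots> = integral {c<..<\<tau>} (T1 \<tau> c) + integral {c<..<\<tau>} (T2 \<tau> c) + integral {c<..<\<tau>} (T3 \<tau> c)"
    using tr1(2) tr2(2) tr3(2) e1 e2 e3 by (simp add: l0_def x0_def X0_def)
  finally show "integral {a c / (2 * a \<tau>)<..<1} (Du (a c) (a \<tau>)) =
       integral {c<..<\<tau>} (T1 \<tau> c) + integral {c<..<\<tau>} (T2 \<tau> c) + integral {c<..<\<tau>} (T3 \<tau> c)" .
qed

end



lemma aux_I1: fixes x2 x3 y z B :: real
  shows "(3 * x2^2 * y / z^4 - x3 * y / z^3) * B = - (y * (x3 / z^3 - 3 * x2^2 / z^4) * B)"
  by (simp add: algebra_simps)

lemma aux_I2: fixes g X x0 S R :: real
  assumes "S > 0" "R > 0" "R * R = X^2 - x0^2" "X > 0"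
  shows "g * (X^2 / (S * R) - 1) = X * (g * (R / S - 1) / X + g * (x0^2 / (R * S)) / X)"
proof -
  have h: "X^2 / (S * R) - 1 = (R / S - 1) + x0^2 / (R * S)"
  proof -
    have X2: "X^2 = R * R + x0^2" using assms by simp
    show ?thesis by (subst X2) (use assms(1,2) in \<open>simp add: field_simps\<close>)
  qed
  have "X * (g * (R / S - 1) / X + g * (x0^2 / (R * S)) / X) = g * ((R / S - 1) + x0^2 / (R * S))"
    using assms(4) by (simp add: field_simps)
  then show ?thesis unfolding h by simp
qed

lemma aux_df0: fixes g x2 x3 y z B X :: real
  assumes "X \<noteq> 0"
  shows "(g + x3 * y / z^3 - 3 * x2^2 * y / z^4) * B = X * (g * B / X + y * (x3 / z^3 - 3 * x2^2 / z^4) * B / X)"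
  using assms by (simp add: field_simps)

context sf begin

lemma I_vals: assumes c: "0 \<le> c" "c < \<tau>"
  shows "I1 a a1 a2 a3 \<tau> c = a1 \<tau> * integral {c<..<\<tau>} (T2 \<tau> c)"
    and "I2 a a1 a2 \<tau> c = a1 \<tau> * (integral {c<..<\<tau>} (T1 \<tau> c) + integral {c<..<\<tau>} (T3 \<tau> c))"
proof -
  have X0: "a \<tau> > 0" using apos c by simp
  have x0: "0 \<le> a c" "a c < a \<tau>" using anonneg aless c by auto
  have i1: "T1 \<tau> c integrable_on {c<..<\<tau>}" using L_split(1)[OF c] by (rule set_lebesgue_integral_eq_integral(1))
  have i3: "T3 \<tau> c integrable_on {c<..<\<tau>}" using L_split(3)[OF c] by (rule set_lebesgue_integral_eq_integral(1))
  have "integral {c..\<tau>} (\<lambda>t. (3 * (a2 t)\<^sup>2 * a t / (a1 t)^4 - a3 t * a t / (a1 t)^3) *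
        (sqrt ((a \<tau>)\<^sup>2 - (a c)\<^sup>2) / sqrt ((a \<tau>)\<^sup>2 - (a t)\<^sup>2) - 1))
     = integral {c<..<\<tau>} (\<lambda>t. (3 * (a2 t)\<^sup>2 * a t / (a1 t)^4 - a3 t * a t / (a1 t)^3) *
        (sqrt ((a \<tau>)\<^sup>2 - (a c)\<^sup>2) / sqrt ((a \<tau>)\<^sup>2 - (a t)\<^sup>2) - 1))"
    by (rule integral_open_interval_real)
  also have "\<dots> = integral {c<..<\<tau>} (\<lambda>t. - a \<tau> * T2 \<tau> c t)"
  proof (rule integral_cong)
    fix t assume "t \<in> {c<..<\<tau>}"
    then show "(3 * (a2 t)\<^sup>2 * a t / (a1 t)^4 - a3 t * a t / (a1 t)^3) *
        (sqrt ((a \<tau>)\<^sup>2 - (a c)\<^sup>2) / sqrt ((a \<tau>)\<^sup>2 - (a t)\<^sup>2) - 1) = - a \<tau> * T2 \<tau> c t"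
      using X0 aux_I1[of "a2 t" "a t" "a1 t" "a3 t"] by (simp add: T2_def bt_def dq_def)
  qed
  also have "\<dots> = - a \<tau> * integral {c<..<\<tau>} (T2 \<tau> c)" by simp
  finally show "I1 a a1 a2 a3 \<tau> c = a1 \<tau> * integral {c<..<\<tau>} (T2 \<tau> c)"
    unfolding I1_def using X0 by simp
  have "integral {c..\<tau>} (\<lambda>t. a2 t / (a1 t)\<^sup>2 *
        ((a \<tau>)\<^sup>2 / (sqrt ((a \<tau>)\<^sup>2 - (a t)\<^sup>2) * sqrt ((a \<tau>)\<^sup>2 - (a c)\<^sup>2)) - 1))
     = integral {c<..<\<tau>} (\<lambda>t. a2 t / (a1 t)\<^sup>2 *
        ((a \<tau>)\<^sup>2 / (sqrt ((a \<tau>)\<^sup>2 - (a t)\<^sup>2) * sqrt ((a \<tau>)\<^sup>2 - (a c)\<^sup>2)) - 1))"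
    by (rule integral_open_interval_real)
  also have "\<dots> = integral {c<..<\<tau>} (\<lambda>t. a \<tau> * (T1 \<tau> c t + T3 \<tau> c t))"
  proof (rule integral_cong)
    fix t assume t: "t \<in> {c<..<\<tau>}"
    have at: "a c \<le> a t" "a t < a \<tau>" "0 \<le> a t" using aless aleq anonneg t c by auto
    define S where "S = sqrt ((a \<tau>)^2 - (a t)^2)"
    define R where "R = sqrt ((a \<tau>)^2 - (a c)^2)"
    have S: "S > 0" using at by (simp add: S_def power_strict_mono)
    have R: "R > 0" "R * R = (a \<tau>)^2 - (a c)^2" using x0 by (auto simp: R_def power_strict_mono)
    show "a2 t / (a1 t)\<^sup>2 * ((a \<tau>)\<^sup>2 / (sqrt ((a \<tau>)\<^sup>2 - (a t)\<^sup>2) * sqrt ((a \<tau>)\<^sup>2 - (a c)\<^sup>2)) - 1)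
        = a \<tau> * (T1 \<tau> c t + T3 \<tau> c t)"
      unfolding T1_def T3_def bt_def S_def[symmetric] R_def[symmetric]
      by (rule aux_I2[OF S R X0])
  qed
  also have "\<dots> = a \<tau> * (integral {c<..<\<tau>} (T1 \<tau> c) + integral {c<..<\<tau>} (T3 \<tau> c))"
    by (simp add: integral_add[OF i1 i3])
  finally show "I2 a a1 a2 \<tau> c = a1 \<tau> * (integral {c<..<\<tau>} (T1 \<tau> c) + integral {c<..<\<tau>} (T3 \<tau> c))"
    unfolding I2_def using X0 by simp
qed

lemma fpos_deriv: assumes c: "0 \<le> c" "c < \<tau>"
  shows "((\<lambda>s. f_pos a a1 a2 s c) has_real_derivative I1 a a1 a2 a3 \<tau> c + I2 a a1 a2 \<tau> c) (at \<tau>)"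
proof -
  define X0 where "X0 = a \<tau>"
  define x0 where "x0 = a c"
  have t0: "\<tau> > 0" using c by simp
  have X0: "X0 > 0" using apos c by (simp add: X0_def)
  have x0: "0 \<le> x0" "x0 < X0" using anonneg aless c by (auto simp: X0_def x0_def)
  define lm where "lm = x0 / (2 * X0)"
  define L where "L = integral {lm<..<1} (Du x0 X0)"
  have Qd: "((\<lambda>X. integral {lm<..<1} (Fu x0 X)) has_real_derivative L) (at (a \<tau>))"
    using Q_deriv(2)[OF x0] unfolding L_def lm_def X0_def .
  have ch: "((\<lambda>s. integral {lm<..<1} (Fu x0 (a s))) has_real_derivative L * a1 \<tau>) (at \<tau>)"
    by (rule DERIV_chain2[OF Qd d1[OF t0]])
  have val: "L * a1 \<tau> = I1 a a1 a2 a3 \<tau> c + I2 a a1 a2 \<tau> c"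
    unfolding I_vals[OF c] L_def lm_def x0_def X0_def L_split(4)[OF c] by (simp add: algebra_simps)
  define B where "B = b (2 * X0)"
  have tB: "\<tau> < B"
  proof -
    have "b X0 < b (2 * X0)" using b_less[of X0 "2 * X0"] X0 by simp
    then show ?thesis using b_a[of \<tau>] t0 by (simp add: B_def X0_def)
  qed
  show ?thesis
  proof (rule has_field_derivative_transform_within_open[OF ch[unfolded val], of "{c<..<B}"])
    show "\<tau> \<in> {c<..<B}" using c tB by simp
    show "open {c<..<B}" by (rule open_greaterThanLessThan)
    fix s assume s: "s \<in> {c<..<B}"
    then have s0: "0 \<le> c" "c < s" "0 < s" using c by auto
    have as: "a s > 0" "a s < 2 * X0" "x0 \<le> a s"
    proof -
      show "a s > 0" using apos s0 by simp
      have "a s < a B" using aless s0 s by simp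
      then show "a s < 2 * X0" using a_b[of "2 * X0"] X0 by (simp add: B_def)
      show "x0 \<le> a s" using aleq s0 by (simp add: x0_def)
    qed
    have llm: "lm \<le> x0 / a s"
      unfolding lm_def using x0 as by (intro divide_left_mono) auto
    have "f_pos a a1 a2 s c = integral {x0 / a s<..<1} (Fu x0 (a s))"
      using fpos_eq[OF s0(1,2)] by (simp add: x0_def)
    also have "\<dots> = integral {lm<..<1} (Fu x0 (a s))"
    proof (rule integral_spike_set)
      have e: "{u \<in> {x0 / a s<..<1} - {lm<..<1}. Fu x0 (a s) u \<noteq> 0} = {}" using llm by auto
      show "negligible {u \<in> {x0 / a s<..<1} - {lm<..<1}. Fu x0 (a s) u \<noteq> 0}"
        unfolding e by (rule negligible_empty)
      have "Fu x0 (a s) u = 0" if "u \<in> {lm<..<1} - {x0 / a s<..<1}" for u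
      proof (rule Fu_zero)
        show "0 \<le> x0" "x0 \<le> a s" "0 < a s" using x0 as by auto
        have "0 \<le> lm" using x0 X0 by (simp add: lm_def)
        then show "0 \<le> u" "u < 1" using that by auto
        have "u \<le> x0 / a s" using that by auto
        then show "a s * u \<le> x0" using as by (simp add: le_divide_eq mult.commute)
      qed
      then have e2: "{u \<in> {lm<..<1} - {x0 / a s<..<1}. Fu x0 (a s) u \<noteq> 0} = {}" by blast
      show "negligible {u \<in> {lm<..<1} - {x0 / a s<..<1}. Fu x0 (a s) u \<noteq> 0}"
        unfolding e2 by (rule negligible_empty)
    qed
    finally show "integral {lm<..<1} (Fu x0 (a s)) = f_pos a a1 a2 s c" by simp
  qed
qed

lemma df0_val: assumes t0: "\<tau> > 0"
  shows "I1 a a1 a2 a3 \<tau> 0 + I2 a a1 a2 \<tau> 0 = df0 a a1 a2 a3 \<tau>"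
proof -
  have c: "0 \<le> (0::real)" "0 < \<tau>" using t0 by auto
  have X0: "a \<tau> > 0" using apos t0 by simp
  have i1: "T1 \<tau> 0 integrable_on {0<..<\<tau>}" using L_split(1)[OF c] by (rule set_lebesgue_integral_eq_integral(1))
  have i2: "T2 \<tau> 0 integrable_on {0<..<\<tau>}" using L_split(2)[OF c] by (rule set_lebesgue_integral_eq_integral(1))
  have J3: "integral {0<..<\<tau>} (T3 \<tau> 0) = 0"
  proof -
    have "T3 \<tau> 0 = (\<lambda>t. 0)" by (simp add: fun_eq_iff T3_def a0)
    then show ?thesis by simp
  qed
  have "integral {0..\<tau>} (\<lambda>t. (a2 t / (a1 t)\<^sup>2 + a3 t * a t / (a1 t)^3 - 3 * (a2 t)\<^sup>2 * a t / (a1 t)^4) *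
        (a \<tau> / sqrt ((a \<tau>)\<^sup>2 - (a t)\<^sup>2) - 1))
     = integral {0<..<\<tau>} (\<lambda>t. (a2 t / (a1 t)\<^sup>2 + a3 t * a t / (a1 t)^3 - 3 * (a2 t)\<^sup>2 * a t / (a1 t)^4) *
        (a \<tau> / sqrt ((a \<tau>)\<^sup>2 - (a t)\<^sup>2) - 1))"
    by (rule integral_open_interval_real)
  also have "\<dots> = integral {0<..<\<tau>} (\<lambda>t. a \<tau> * (T1 \<tau> 0 t + T2 \<tau> 0 t))"
  proof (rule integral_cong)
    fix t assume "t \<in> {0<..<\<tau>}"
    have bt: "bt \<tau> 0 t = a \<tau> / sqrt ((a \<tau>)\<^sup>2 - (a t)\<^sup>2) - 1"
      using X0 by (simp add: bt_def a0)
    show "(a2 t / (a1 t)\<^sup>2 + a3 t * a t / (a1 t)^3 - 3 * (a2 t)\<^sup>2 * a t / (a1 t)^4) *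
        (a \<tau> / sqrt ((a \<tau>)\<^sup>2 - (a t)\<^sup>2) - 1) = a \<tau> * (T1 \<tau> 0 t + T2 \<tau> 0 t)"
      unfolding T1_def T2_def dq_def bt[symmetric]
      by (rule aux_df0) (use X0 in simp)
  qed
  also have "\<dots> = a \<tau> * (integral {0<..<\<tau>} (T1 \<tau> 0) + integral {0<..<\<tau>} (T2 \<tau> 0))"
    by (simp add: integral_add[OF i1 i2])
  finally have "df0 a a1 a2 a3 \<tau> = a1 \<tau> * (integral {0<..<\<tau>} (T1 \<tau> 0) + integral {0<..<\<tau>} (T2 \<tau> 0))"
    unfolding df0_def using X0 by simp
  then show ?thesis unfolding I_vals[OF c] J3 by (simp add: algebra_simps)
qed

end

theorem lemma5p9:
  fixes a a1 a2 a3 :: "real \<Rightarrow> real" and C \<tau> t0 :: real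
  assumes sr: "strongly_regular_scale_factor a a1 a2"
    and even: "\<forall>t. a (- t) = a t"
    and d3: "\<forall>t>0. (a2 has_real_derivative a3 t) (at t)"
    and Cpos: "C > 0"
    and bound: "\<forall>t>0. \<bar>a3 t * (a t)\<^sup>2 / (a1 t)^3\<bar> \<le> C"
    and tau: "\<tau> > 0"
    and t0: "- \<tau> < t0" "t0 < \<tau>"
  shows "((\<lambda>s. f_fun a a1 a2 s t0) has_real_derivative
            (if t0 > 0 then I1 a a1 a2 a3 \<tau> t0 + I2 a a1 a2 \<tau> t0
             else if t0 = 0 then df0 a a1 a2 a3 \<tau>
             else 2 * df0 a a1 a2 a3 \<tau> - I1 a a1 a2 a3 \<tau> (- t0) - I2 a a1 a2 \<tau> (- t0)))
         (at \<tau>)"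
proof -
  obtain K where K: "K \<ge> 1" "\<forall>t>0. a t * a2 t / (a1 t)\<^sup>2 \<ge> - K"
    using sr unfolding strongly_regular_scale_factor_def by blast
  have r: "regular_scale_factor a a1 a2" using sr unfolding strongly_regular_scale_factor_def by blast
  interpret sf a a1 a2 a3 K C
  proof
    show "a 0 = 0" "strict_mono_on {0..} a" "bij_betw a {0..} {0..}"
      using r unfolding regular_scale_factor_def by auto
    show "\<And>t. t > 0 \<Longrightarrow> (a has_real_derivative a1 t) (at t)"
      "\<And>t. t > 0 \<Longrightarrow> (a1 has_real_derivative a2 t) (at t)"
      "\<And>t. t > 0 \<Longrightarrow> a1 t \<noteq> 0"
      "\<And>t. t > 0 \<Longrightarrow> a t * a2 t / (a1 t)^2 \<le> 1"
      using r unfolding regular_scale_factor_def by auto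
    show "\<And>t. t > 0 \<Longrightarrow> (a2 has_real_derivative a3 t) (at t)" using d3 by auto
    show "K \<ge> 1" "\<And>t. t > 0 \<Longrightarrow> a t * a2 t / (a1 t)^2 \<ge> - K" using K by auto
    show "\<And>t. t > 0 \<Longrightarrow> \<bar>a3 t * (a t)^2 / (a1 t)^3\<bar> \<le> C" using bound by auto
  qed
  show ?thesis
  proof (cases "t0 > 0")
    case True
    have "(\<lambda>s. f_fun a a1 a2 s t0) = (\<lambda>s. f_pos a a1 a2 s t0)"
      using True by (simp add: fun_eq_iff f_fun_def)
    then show ?thesis using fpos_deriv[of t0 \<tau>] True t0 by simp
  next
    case False
    show ?thesis
    proof (cases "t0 = 0")
      case True
      have "(\<lambda>s. f_fun a a1 a2 s t0) = (\<lambda>s. f_pos a a1 a2 s 0)"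
        using True by (simp add: fun_eq_iff f_fun_def)
      then show ?thesis using fpos_deriv[of 0 \<tau>] df0_val[OF tau] True tau by simp
    next
      case False2: False
      then have neg: "t0 < 0" using False by simp
      have "(\<lambda>s. f_fun a a1 a2 s t0) = (\<lambda>s. 2 * f_pos a a1 a2 s 0 - f_pos a a1 a2 s (- t0))"
        using neg by (simp add: fun_eq_iff f_fun_def)
      moreover have "((\<lambda>s. 2 * f_pos a a1 a2 s 0 - f_pos a a1 a2 s (- t0)) has_real_derivative
          2 * (I1 a a1 a2 a3 \<tau> 0 + I2 a a1 a2 \<tau> 0) - (I1 a a1 a2 a3 \<tau> (- t0) + I2 a a1 a2 \<tau> (- t0))) (at \<tau>)"
        using neg t0 tau by (intro DERIV_diff DERIV_cmult fpos_deriv) auto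
      ultimately show ?thesis using df0_val[OF tau] neg False2 False by (simp add: diff_diff_eq)
    qed
  qed
qed


end
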